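(* Let $\mathbf A$ be a pseudo-Kleene lattice. Then $\mathbf A$ is super-paraorthomodular if and only if $\mathbf A$ has no subalgebra isomorphic to $\mathbf B_6$, no subalgebra isomorphic to $\mathbf B_8$, and no subalgebra $\mathbf B$ admitting a congruence $\theta$ such that $\mathbf B/\theta\cong\mathbf B_8^*$ or $\mathbf B/\theta\cong\mathbf B_{10}$.
   Context: A pseudo-Kleene lattice is an algebra $(A,\land,\lor,{}',0,1)$ that is a bounded lattice with an antitone involution ${}'$ ($x\leq y\Rightarrow y'\leq x'$, $x''=x$) satisfying $x\land x'\leq y\lor y'$; subalgebras and congruences are with respect to $\land,\lor,{}',0,1$. It is super-paraorthomodular if for all $x,y$: (SP1) $x\leq y$ and $x'\land y=(x\land x')\lor(y\land y')$ imply $y\land(x\lor x')=x\lor(y\land y')$; (SP2) $x\leq y$ implies $(x\land x')\lor(y\land y')=(x'\land y)\land(x'\land y)'$. In all the following finite pseudo-Kleene lattices the involution maps $u\leftrightarrow u'$ and $0\leftrightarrow 1$, and the order is given by covering relations. $\mathbf B_6$: elements $0,x,y,y',x',1$ with $0\prec x\prec y\prec 1$ and $0\prec y'\prec x'\prec 1$. $\mathbf B_8$: elements $0,z',x,y,y',x',z,1$ with $0\prec z'$, $z'\prec x\prec y\prec z$, $z'\prec y'\prec x'\prec z$, $z\prec 1$. $\mathbf B_8^*$: elements $0,x,y,z,z',y',x',1$ with $0\prec x$, $0\prec y$, $x\prec z$, $y\prec z'$, $z\prec z'$, $z\prec y'$, $z'\prec x'$, $y'\prec 1$, $x'\prec 1$.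 $\mathbf B_{10}$: elements $0,x,y',m,a,a',x',y,m',1$ with $0\prec y'$, $0\prec m$, $0\prec x$, $y'\prec a'$, $m\prec a'$, $m\prec a$, $x\prec a$, $a'\prec x'$, $a'\prec m'$, $a\prec m'$, $a\prec y$, $x'\prec 1$, $m'\prec 1$, $y\prec 1$. *)

theory Defs
  imports Main
begin

record 'a pkl =
  carrier :: "'a set"
  meet :: "'a \<Rightarrow> 'a \<Rightarrow> 'a"
  join :: "'a \<Rightarrow> 'a \<Rightarrow> 'a"
  neg  :: "'a \<Rightarrow> 'a"
  bot  :: 'a
  top  :: 'a

definition leq :: "'a pkl \<Rightarrow> 'a \<Rightarrow> 'a \<Rightarrow> bool" where
  "leq A x y \<longleftrightarrow> meet A x y = x"

definition closed_ops :: "'a pkl \<Rightarrow> 'a set \<Rightarrow> bool" where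
  "closed_ops A S \<longleftrightarrow> bot A \<in> S \<and> top A \<in> S \<and>
     (\<forall>x\<in>S. \<forall>y\<in>S. meet A x y \<in> S \<and> join A x y \<in> S) \<and> (\<forall>x\<in>S. neg A x \<in> S)"

definition bounded_lattice_alg :: "'a pkl \<Rightarrow> bool" where
  "bounded_lattice_alg A \<longleftrightarrow> closed_ops A (carrier A) \<and>
    (\<forall>x\<in>carrier A. \<forall>y\<in>carrier A.
        meet A x y = meet A y x \<and> join A x y = join A y x \<and>
        meet A x (join A x y) = x \<and> join A x (meet A x y) = x) \<and>
    (\<forall>x\<in>carrier A. \<forall>y\<in>carrier A. \<forall>z\<in>carrier A.
        meet A x (meet A y z) = meet A (meet A x y) z \<and>
        join A x (join A y z) = join A (join A x y) z) \<and>
    (\<forall>x\<in>carrier A. meet A x (bot A) = bot A \<and> join A x (top A) = top A)"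

definition pseudo_kleene :: "'a pkl \<Rightarrow> bool" where
  "pseudo_kleene A \<longleftrightarrow> bounded_lattice_alg A \<and>
    (\<forall>x\<in>carrier A. neg A (neg A x) = x) \<and>
    (\<forall>x\<in>carrier A. \<forall>y\<in>carrier A. leq A x y \<longrightarrow> leq A (neg A y) (neg A x)) \<and>
    (\<forall>x\<in>carrier A. \<forall>y\<in>carrier A.
        leq A (meet A x (neg A x)) (join A y (neg A y)))"

definition super_paraorthomodular :: "'a pkl \<Rightarrow> bool" where
  "super_paraorthomodular A \<longleftrightarrow>
    (\<forall>x\<in>carrier A. \<forall>y\<in>carrier A.
       leq A x y \<and> meet A (neg A x) y = join A (meet A x (neg A x)) (meet A y (neg A y))
       \<longrightarrow> meet A y (join A x (neg A x)) = join A x (meet A y (neg A y))) \<and>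
    (\<forall>x\<in>carrier A. \<forall>y\<in>carrier A.
       leq A x y \<longrightarrow>
       join A (meet A x (neg A x)) (meet A y (neg A y))
         = meet A (meet A (neg A x) y) (neg A (meet A (neg A x) y)))"

definition subalgebra :: "'a set \<Rightarrow> 'a pkl \<Rightarrow> bool" where
  "subalgebra B A \<longleftrightarrow> B \<subseteq> carrier A \<and> closed_ops A B"

definition restrict_alg :: "'a pkl \<Rightarrow> 'a set \<Rightarrow> 'a pkl" where
  "restrict_alg A B = A\<lparr>carrier := B\<rparr>"

definition congruence :: "'a pkl \<Rightarrow> ('a \<times> 'a) set \<Rightarrow> bool" where
  "congruence A \<theta> \<longleftrightarrow> equiv (carrier A) \<theta> \<and>
    (\<forall>x x' y y'. (x, x') \<in> \<theta> \<and> (y, y') \<in> \<theta> \<longrightarrow>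
        (meet A x y, meet A x' y') \<in> \<theta> \<and> (join A x y, join A x' y') \<in> \<theta>) \<and>
    (\<forall>x x'. (x, x') \<in> \<theta> \<longrightarrow> (neg A x, neg A x') \<in> \<theta>)"

definition quotient_alg :: "'a pkl \<Rightarrow> ('a \<times> 'a) set \<Rightarrow> 'a set pkl" where
  "quotient_alg A \<theta> =
    \<lparr> carrier = carrier A // \<theta>,
      meet = (\<lambda>X Y. \<theta> `` {meet A (SOME x. x \<in> X) (SOME y. y \<in> Y)}),
      join = (\<lambda>X Y. \<theta> `` {join A (SOME x. x \<in> X) (SOME y. y \<in> Y)}),
      neg  = (\<lambda>X. \<theta> `` {neg A (SOME x. x \<in> X)}),
      bot  = \<theta> `` {bot A},
      top  = \<theta> `` {top A} \<rparr>"

definition iso :: "'a pkl \<Rightarrow> 'b pkl \<Rightarrow> ('a \<Rightarrow> 'b) \<Rightarrow> bool" where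
  "iso A C f \<longleftrightarrow> bij_betw f (carrier A) (carrier C) \<and>
    (\<forall>x\<in>carrier A. \<forall>y\<in>carrier A.
        f (meet A x y) = meet C (f x) (f y) \<and> f (join A x y) = join C (f x) (f y)) \<and>
    (\<forall>x\<in>carrier A. f (neg A x) = neg C (f x)) \<and>
    f (bot A) = bot C \<and> f (top A) = top C"

definition isomorphic :: "'a pkl \<Rightarrow> 'b pkl \<Rightarrow> bool" where
  "isomorphic A C \<longleftrightarrow> (\<exists>f. iso A C f)"

definition ord_of :: "('a \<times> 'a) set \<Rightarrow> 'a \<Rightarrow> 'a \<Rightarrow> bool" where
  "ord_of C x y \<longleftrightarrow> (x, y) \<in> C\<^sup>*"

definition glb_of :: "('a \<times> 'a) set \<Rightarrow> 'a \<Rightarrow> 'a \<Rightarrow> 'a" where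
  "glb_of C x y = (THE z. ord_of C z x \<and> ord_of C z y \<and>
      (\<forall>w. ord_of C w x \<and> ord_of C w y \<longrightarrow> ord_of C w z))"

definition lub_of :: "('a \<times> 'a) set \<Rightarrow> 'a \<Rightarrow> 'a \<Rightarrow> 'a" where
  "lub_of C x y = (THE z. ord_of C x z \<and> ord_of C y z \<and>
      (\<forall>w. ord_of C x w \<and> ord_of C y w \<longrightarrow> ord_of C z w))"

definition alg_of :: "('a \<times> 'a) set \<Rightarrow> ('a \<Rightarrow> 'a) \<Rightarrow> 'a \<Rightarrow> 'a \<Rightarrow> 'a pkl" where
  "alg_of C n b t = \<lparr> carrier = UNIV, meet = glb_of C, join = lub_of C, neg = n,
                       bot = b, top = t \<rparr>"

datatype b6 = B6_0 | B6_x | B6_y | B6_y' | B6_x' | B6_1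

fun neg6 :: "b6 \<Rightarrow> b6" where
  "neg6 B6_0 = B6_1" | "neg6 B6_1 = B6_0" | "neg6 B6_x = B6_x'" | "neg6 B6_x' = B6_x"
| "neg6 B6_y = B6_y'" | "neg6 B6_y' = B6_y"

definition B6 :: "b6 pkl" where
  "B6 = alg_of {(B6_0, B6_x), (B6_x, B6_y), (B6_y, B6_1),
                (B6_0, B6_y'), (B6_y', B6_x'), (B6_x', B6_1)} neg6 B6_0 B6_1"

datatype b8 = B8_0 | B8_z' | B8_x | B8_y | B8_y' | B8_x' | B8_z | B8_1

fun neg8 :: "b8 \<Rightarrow> b8" where
  "neg8 B8_0 = B8_1" | "neg8 B8_1 = B8_0" | "neg8 B8_x = B8_x'" | "neg8 B8_x' = B8_x"
| "neg8 B8_y = B8_y'" | "neg8 B8_y' = B8_y" | "neg8 B8_z = B8_z'" | "neg8 B8_z' = B8_z"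

definition B8 :: "b8 pkl" where
  "B8 = alg_of {(B8_0, B8_z'), (B8_z', B8_x), (B8_x, B8_y), (B8_y, B8_z),
                (B8_z', B8_y'), (B8_y', B8_x'), (B8_x', B8_z), (B8_z, B8_1)} neg8 B8_0 B8_1"

datatype b8s = S_0 | S_x | S_y | S_z | S_z' | S_y' | S_x' | S_1

fun neg8s :: "b8s \<Rightarrow> b8s" where
  "neg8s S_0 = S_1" | "neg8s S_1 = S_0" | "neg8s S_x = S_x'" | "neg8s S_x' = S_x"
| "neg8s S_y = S_y'" | "neg8s S_y' = S_y" | "neg8s S_z = S_z'" | "neg8s S_z' = S_z"

definition B8s :: "b8s pkl" where
  "B8s = alg_of {(S_0, S_x), (S_0, S_y), (S_x, S_z), (S_y, S_z'), (S_z, S_z'),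
                 (S_z, S_y'), (S_z', S_x'), (S_y', S_1), (S_x', S_1)} neg8s S_0 S_1"

datatype b10 = T_0 | T_x | T_y' | T_m | T_a | T_a' | T_x' | T_y | T_m' | T_1

fun neg10 :: "b10 \<Rightarrow> b10" where
  "neg10 T_0 = T_1" | "neg10 T_1 = T_0" | "neg10 T_x = T_x'" | "neg10 T_x' = T_x"
| "neg10 T_y = T_y'" | "neg10 T_y' = T_y" | "neg10 T_m = T_m'" | "neg10 T_m' = T_m"
| "neg10 T_a = T_a'" | "neg10 T_a' = T_a"

definition B10 :: "b10 pkl" where
  "B10 = alg_of {(T_0, T_y'), (T_0, T_m), (T_0, T_x), (T_y', T_a'), (T_m, T_a'),
                 (T_m, T_a), (T_x, T_a), (T_a', T_x'), (T_a', T_m'), (T_a, T_m'),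
                 (T_a, T_y), (T_x', T_1), (T_m', T_1), (T_y, T_1)} neg10 T_0 T_1"

end

theory Submission
  imports Defs
begin


locale pk =
  fixes A :: "'a pkl"
  assumes pk: "pseudo_kleene A"
begin

abbreviation "CA \<equiv> carrier A"
abbreviation M where "M \<equiv> meet A"
abbreviation J where "J \<equiv> join A"
abbreviation N where "N \<equiv> neg A"
abbreviation L where "L \<equiv> leq A"
abbreviation Z where "Z \<equiv> bot A"
abbreviation U where "U \<equiv> top A"

lemma bl: "bounded_lattice_alg A" using pk unfolding pseudo_kleene_def by blast

lemma cM[simp]: "x \<in> CA \<Longrightarrow> y \<in> CA \<Longrightarrow> M x y \<in> CA"
  using bl unfolding bounded_lattice_alg_def closed_ops_def by blast
lemma cJ[simp]: "x \<in> CA \<Longrightarrow> y \<in> CA \<Longrightarrow> J x y \<in> CA"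
  using bl unfolding bounded_lattice_alg_def closed_ops_def by blast
lemma cN[simp]: "x \<in> CA \<Longrightarrow> N x \<in> CA"
  using bl unfolding bounded_lattice_alg_def closed_ops_def by blast
lemma cZ[simp]: "Z \<in> CA"
  using bl unfolding bounded_lattice_alg_def closed_ops_def by blast
lemma cU[simp]: "U \<in> CA"
  using bl unfolding bounded_lattice_alg_def closed_ops_def by blast

lemma M_comm: "x \<in> CA \<Longrightarrow> y \<in> CA \<Longrightarrow> M x y = M y x"
  using bl unfolding bounded_lattice_alg_def by blast
lemma J_comm: "x \<in> CA \<Longrightarrow> y \<in> CA \<Longrightarrow> J x y = J y x"
  using bl unfolding bounded_lattice_alg_def by blast
lemma abs1: "x \<in> CA \<Longrightarrow> y \<in> CA \<Longrightarrow> M x (J x y) = x"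
  using bl unfolding bounded_lattice_alg_def by blast
lemma abs2: "x \<in> CA \<Longrightarrow> y \<in> CA \<Longrightarrow> J x (M x y) = x"
  using bl unfolding bounded_lattice_alg_def by blast
lemma M_assoc: "x \<in> CA \<Longrightarrow> y \<in> CA \<Longrightarrow> z \<in> CA \<Longrightarrow> M x (M y z) = M (M x y) z"
  using bl unfolding bounded_lattice_alg_def by blast
lemma J_assoc: "x \<in> CA \<Longrightarrow> y \<in> CA \<Longrightarrow> z \<in> CA \<Longrightarrow> J x (J y z) = J (J x y) z"
  using bl unfolding bounded_lattice_alg_def by blast
lemma M_Z: "x \<in> CA \<Longrightarrow> M x Z = Z"
  using bl unfolding bounded_lattice_alg_def by blast
lemma J_U: "x \<in> CA \<Longrightarrow> J x U = U"
  using bl unfolding bounded_lattice_alg_def by blast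
lemma NN[simp]: "x \<in> CA \<Longrightarrow> N (N x) = x"
  using pk unfolding pseudo_kleene_def by blast
lemma N_anti: "x \<in> CA \<Longrightarrow> y \<in> CA \<Longrightarrow> L x y \<Longrightarrow> L (N y) (N x)"
  using pk unfolding pseudo_kleene_def by blast
lemma kleene: "x \<in> CA \<Longrightarrow> y \<in> CA \<Longrightarrow> L (M x (N x)) (J y (N y))"
  using pk unfolding pseudo_kleene_def by blast

lemma M_idem: "x \<in> CA \<Longrightarrow> M x x = x"
proof -
  assume x: "x \<in> CA"
  have "J x (M x x) = x" using abs2[OF x x] .
  then have "M x (J x (M x x)) = M x x" by simp
  moreover have "M x (J x (M x x)) = x" using abs1[OF x] x by simp
  ultimately show ?thesis by simp
qed
lemma J_idem: "x \<in> CA \<Longrightarrow> J x x = x"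
proof -
  assume x: "x \<in> CA"
  have "M x (J x x) = x" using abs1[OF x x] .
  then have "J x (M x (J x x)) = J x x" by simp
  moreover have "J x (M x (J x x)) = x" using abs2[OF x] x by simp
  ultimately show ?thesis by simp
qed

lemma L_refl[simp]: "x \<in> CA \<Longrightarrow> L x x"
  by (simp add: leq_def M_idem)
lemma L_trans: "L x y \<Longrightarrow> L y z \<Longrightarrow> x \<in> CA \<Longrightarrow> y \<in> CA \<Longrightarrow> z \<in> CA \<Longrightarrow> L x z"
  unfolding leq_def
proof -
  assume h: "M x y = x" "M y z = y" "x \<in> CA" "y \<in> CA" "z \<in> CA"
  have "M x z = M (M x y) z" using h by simp
  also have "\<dots> = M x (M y z)" using h(3-5) by (simp add: M_assoc)
  also have "\<dots> = x" using h by simp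
  finally show "M x z = x" .
qed
lemma L_antisym: "L x y \<Longrightarrow> L y x \<Longrightarrow> x \<in> CA \<Longrightarrow> y \<in> CA \<Longrightarrow> x = y"
  unfolding leq_def using M_comm by force
lemma L_J: "x \<in> CA \<Longrightarrow> y \<in> CA \<Longrightarrow> L x y \<longleftrightarrow> J x y = y"
proof -
  assume xy: "x \<in> CA" "y \<in> CA"
  show ?thesis unfolding leq_def
  proof
    assume "M x y = x"
    then have "J x y = J (M x y) y" by simp
    also have "\<dots> = J y (M y x)" using xy by (simp add: J_comm M_comm)
    also have "\<dots> = y" using xy by (simp add: abs2)
    finally show "J x y = y" .
  next
    assume "J x y = y"
    then have "M x y = M x (J x y)" by simp
    then show "M x y = x" using xy by (simp add: abs1)
  qed
qed
lemma M_L1: "x \<in> CA \<Longrightarrow> y \<in> CA \<Longrightarrow> L (M x y) x"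
proof -
  assume xy: "x \<in> CA" "y \<in> CA"
  have "M (M x y) x = M x (M x y)" using xy by (simp add: M_comm)
  also have "\<dots> = M (M x x) y" using xy by (simp add: M_assoc)
  also have "\<dots> = M x y" using xy by (simp add: M_idem)
  finally show ?thesis by (simp add: leq_def)
qed
lemma M_L2: "x \<in> CA \<Longrightarrow> y \<in> CA \<Longrightarrow> L (M x y) y"
proof -
  assume xy: "x \<in> CA" "y \<in> CA"
  have "M (M x y) y = M x (M y y)" using xy by (simp add: M_assoc)
  also have "\<dots> = M x y" using xy by (simp add: M_idem)
  finally show ?thesis by (simp add: leq_def)
qed
lemma L_M: "L z x \<Longrightarrow> L z y \<Longrightarrow> x \<in> CA \<Longrightarrow> y \<in> CA \<Longrightarrow> z \<in> CA \<Longrightarrow> L z (M x y)"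
  unfolding leq_def
proof -
  assume h: "M z x = z" "M z y = z" "x \<in> CA" "y \<in> CA" "z \<in> CA"
  have "M z (M x y) = M (M z x) y" using h(3-5) by (simp add: M_assoc)
  also have "\<dots> = z" using h by simp
  finally show "M z (M x y) = z" .
qed
lemma J_L1: "x \<in> CA \<Longrightarrow> y \<in> CA \<Longrightarrow> L x (J x y)"
  unfolding leq_def by (simp add: abs1)
lemma J_L2: "x \<in> CA \<Longrightarrow> y \<in> CA \<Longrightarrow> L y (J x y)"
  unfolding leq_def using J_comm[of x y] abs1[of y x] by simp
lemma L_Jl: "L x z \<Longrightarrow> L y z \<Longrightarrow> x \<in> CA \<Longrightarrow> y \<in> CA \<Longrightarrow> z \<in> CA \<Longrightarrow> L (J x y) z"
  by (simp add: L_J J_assoc[symmetric])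
lemma Z_L[simp]: "x \<in> CA \<Longrightarrow> L Z x"
  unfolding leq_def using M_Z M_comm cZ by simp
lemma L_U[simp]: "x \<in> CA \<Longrightarrow> L x U"
  by (simp add: L_J J_U)

lemma L_M_iff[simp]: "x \<in> CA \<Longrightarrow> y \<in> CA \<Longrightarrow> z \<in> CA \<Longrightarrow> L z (M x y) \<longleftrightarrow> L z x \<and> L z y"
proof -
  assume h: "x \<in> CA" "y \<in> CA" "z \<in> CA"
  show ?thesis
  proof
    assume "L z (M x y)"
    then show "L z x \<and> L z y" using L_trans[OF _ M_L1[of x y]] L_trans[OF _ M_L2[of x y]] h by simp
  qed (use L_M h in blast)
qed
lemma J_L_iff[simp]: "x \<in> CA \<Longrightarrow> y \<in> CA \<Longrightarrow> z \<in> CA \<Longrightarrow> L (J x y) z \<longleftrightarrow> L x z \<and> L y z"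
proof -
  assume h: "x \<in> CA" "y \<in> CA" "z \<in> CA"
  show ?thesis
  proof
    assume "L (J x y) z"
    then show "L x z \<and> L y z" using L_trans[OF J_L1[of x y]] L_trans[OF J_L2[of x y]] h by simp
  qed (use L_Jl h in blast)
qed
lemma ML1: "L x z \<Longrightarrow> x \<in> CA \<Longrightarrow> y \<in> CA \<Longrightarrow> z \<in> CA \<Longrightarrow> L (M x y) z"
  using L_trans[OF M_L1[of x y]] by simp
lemma ML2: "L y z \<Longrightarrow> x \<in> CA \<Longrightarrow> y \<in> CA \<Longrightarrow> z \<in> CA \<Longrightarrow> L (M x y) z"
  using L_trans[OF M_L2[of x y]] by simp
lemma LJ1: "L z x \<Longrightarrow> x \<in> CA \<Longrightarrow> y \<in> CA \<Longrightarrow> z \<in> CA \<Longrightarrow> L z (J x y)"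
  using L_trans[OF _ J_L1[of x y]] by simp
lemma LJ2: "L z y \<Longrightarrow> x \<in> CA \<Longrightarrow> y \<in> CA \<Longrightarrow> z \<in> CA \<Longrightarrow> L z (J x y)"
  using L_trans[OF _ J_L2[of x y]] by simp

lemma N_L_iff[simp]: "x \<in> CA \<Longrightarrow> y \<in> CA \<Longrightarrow> L (N x) (N y) \<longleftrightarrow> L y x"
  using N_anti[of y x] N_anti[of "N x" "N y"] by auto
lemma N_inj[simp]: "x \<in> CA \<Longrightarrow> y \<in> CA \<Longrightarrow> N x = N y \<longleftrightarrow> x = y"
  using NN by metis
lemma L_N_swap: "x \<in> CA \<Longrightarrow> y \<in> CA \<Longrightarrow> L x (N y) \<longleftrightarrow> L y (N x)"
  using N_L_iff[of "N y" x] by simp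
lemma N_L_swap: "x \<in> CA \<Longrightarrow> y \<in> CA \<Longrightarrow> L (N x) y \<longleftrightarrow> L (N y) x"
  using N_L_iff[of x "N y"] by simp

lemma N_M[simp]: "x \<in> CA \<Longrightarrow> y \<in> CA \<Longrightarrow> N (M x y) = J (N x) (N y)"
proof -
  assume xy: "x \<in> CA" "y \<in> CA"
  have 1: "L (J (N x) (N y)) (N (M x y))" using xy by (simp add: M_L1 M_L2)
  have "L (N (J (N x) (N y))) (M x y)" using xy
    by (simp add: N_L_swap J_L1 J_L2)
  then have 2: "L (N (M x y)) (J (N x) (N y))" using xy
    using N_L_swap[of "M x y" "J (N x) (N y)"] by simp
  show ?thesis using 1 2 xy by (simp add: L_antisym)
qed
lemma N_J[simp]: "x \<in> CA \<Longrightarrow> y \<in> CA \<Longrightarrow> N (J x y) = M (N x) (N y)"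
proof -
  assume xy: "x \<in> CA" "y \<in> CA"
  have "J x y = N (M (N x) (N y))" using N_M[of "N x" "N y"] xy by simp
  then have "N (J x y) = N (N (M (N x) (N y)))" by (rule arg_cong)
  also have "\<dots> = M (N x) (N y)" using xy by (intro NN cM cN)
  finally show ?thesis .
qed
lemma L_Z_iff[simp]: "x \<in> CA \<Longrightarrow> L x Z \<longleftrightarrow> x = Z"
  using L_antisym Z_L cZ by blast
lemma U_L_iff[simp]: "x \<in> CA \<Longrightarrow> L U x \<longleftrightarrow> x = U"
  using L_antisym L_U cU by blast
lemma N_Z[simp]: "N Z = U"
proof -
  have "L Z (N U)" by simp
  then have "L U (N Z)" using L_N_swap[of Z U] by simp
  then show ?thesis using L_antisym[of "N Z" U] by simp
qed
lemma N_U[simp]: "N U = Z"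
  using NN[of Z] by simp

end


definition goodT :: "'b pkl \<Rightarrow> bool" where
"goodT T \<longleftrightarrow> carrier T = UNIV \<and> (\<forall>i j. meet T i j = meet T j i) \<and> (\<forall>i j. leq T (meet T i j) i) \<and>
   (\<forall>i j. leq T i j \<and> leq T j i \<longrightarrow> i = j) \<and> (\<forall>i. neg T (neg T i) = i) \<and>
   (\<forall>i j. join T i j = neg T (meet T (neg T i) (neg T j))) \<and> top T = neg T (bot T) \<and>
   (\<forall>i j. leq T i j \<longrightarrow> leq T (neg T j) (neg T i))"

context pk begin

lemma restrict_simps[simp]: "meet (restrict_alg A B) = meet A" "join (restrict_alg A B) = join A"
  "neg (restrict_alg A B) = neg A" "bot (restrict_alg A B) = bot A" "top (restrict_alg A B) = top A"
  "carrier (restrict_alg A B) = B"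
  by (simp_all add: restrict_alg_def)

theorem interval_construction:
  fixes T :: "'b pkl" and lo :: "'b \<Rightarrow> 'a"
  assumes Tcar: "carrier T = UNIV"
  and Tcomm: "\<And>i j. meet T i j = meet T j i"
  and Tlow: "\<And>i j. leq T (meet T i j) i"
  and Tanti: "\<And>i j. leq T i j \<Longrightarrow> leq T j i \<Longrightarrow> i = j"
  and Tinv: "\<And>i. neg T (neg T i) = i"
  and Tdm: "\<And>i j. join T i j = neg T (meet T (neg T i) (neg T j))"
  and Tbt: "top T = neg T (bot T)"
  and lo_car: "\<And>i. lo i \<in> CA"
  and lo_bot: "lo (bot T) = Z"
  and mono: "\<And>i j. leq T i j \<Longrightarrow> L (lo i) (lo j)"
  and himeet: "\<And>i j. \<not> leq T i j \<Longrightarrow> \<not> leq T j i \<Longrightarrow>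
        L (M (N (lo (neg T i))) (N (lo (neg T j)))) (N (lo (neg T (meet T i j))))"
  and lohi: "\<And>i. L (lo i) (N (lo (neg T i)))"
  and disj: "\<And>i j. \<not> leq T i j \<Longrightarrow> \<not> L (lo i) (N (lo (neg T j)))"
  shows "\<exists>B \<theta>. subalgebra B A \<and> congruence (restrict_alg A B) \<theta> \<and>
            isomorphic (quotient_alg (restrict_alg A B) \<theta>) T"
    and "(\<And>i. N (lo (neg T i)) = lo i) \<Longrightarrow> \<exists>B. subalgebra B A \<and> isomorphic (restrict_alg A B) T"
proof -
  define hi where "hi i = N (lo (neg T i))" for i
  have hi_car: "hi i \<in> CA" for i by (simp add: hi_def lo_car)
  define I where "I i = {u \<in> CA. L (lo i) u \<and> L u (hi i)}" for i
  define B where "B = (\<Union>i. I i)"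
  define phi where "phi u = (THE i. u \<in> I i)" for u
  have Tmeet_le: "leq T i j \<Longrightarrow> meet T i j = i" for i j by (simp add: leq_def)
  have himeet': "L (M (hi i) (hi j)) (hi (meet T i j))" for i j
  proof (cases "leq T i j")
    case True then show ?thesis using hi_car by (simp add: Tmeet_le M_L1)
  next
    case False
    show ?thesis
    proof (cases "leq T j i")
      case True then have "meet T i j = j" using Tcomm Tmeet_le by metis
      then show ?thesis using hi_car by (simp add: M_L2)
    next
      case False2: False
      then show ?thesis using himeet[OF False False2] by (simp add: hi_def)
    qed
  qed
  have uniq: "u \<in> I i \<Longrightarrow> u \<in> I j \<Longrightarrow> i = j" for u i j
  proof -
    assume u: "u \<in> I i" "u \<in> I j"
    have "leq T i j"
    proof (rule ccontr)
      assume "\<not> leq T i j"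
      with disj have "\<not> L (lo i) (hi j)" by (simp add: hi_def)
      moreover have "L (lo i) (hi j)" using u L_trans[of "lo i" u "hi j"] lo_car hi_car by (auto simp: I_def)
      ultimately show False by simp
    qed
    moreover have "leq T j i"
    proof (rule ccontr)
      assume "\<not> leq T j i"
      with disj have "\<not> L (lo j) (hi i)" by (simp add: hi_def)
      moreover have "L (lo j) (hi i)" using u L_trans[of "lo j" u "hi i"] lo_car hi_car by (auto simp: I_def)
      ultimately show False by simp
    qed
    ultimately show "i = j" using Tanti by blast
  qed
  have phi_eq: "u \<in> I i \<Longrightarrow> phi u = i" for u i
    unfolding phi_def using uniq by blast
  have lo_in: "lo i \<in> I i" for i using lohi lo_car by (simp add: I_def hi_def)
  have meet_in: "u \<in> I i \<Longrightarrow> v \<in> I j \<Longrightarrow> M u v \<in> I (meet T i j)" for u v i j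
  proof -
    assume u: "u \<in> I i" and v: "v \<in> I j"
    have uv: "u \<in> CA" "v \<in> CA" using u v by (auto simp: I_def)
    have "L (lo (meet T i j)) (lo i)" using mono Tlow by blast
    moreover have "L (lo (meet T i j)) (lo j)" using mono Tlow Tcomm by metis
    ultimately have 1: "L (lo (meet T i j)) (M u v)"
      using u v uv lo_car L_trans by (simp add: I_def)
    have "L (M u v) (M (hi i) (hi j))" using u v uv hi_car by (simp add: I_def ML1 ML2)
    then have 2: "L (M u v) (hi (meet T i j))" using himeet' L_trans hi_car uv by (meson cM)
    show ?thesis using 1 2 uv by (simp add: I_def)
  qed
  have neg_in: "u \<in> I i \<Longrightarrow> N u \<in> I (neg T i)" for u i
  proof -
    assume u: "u \<in> I i"
    have uC: "u \<in> CA" using u by (simp add: I_def)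
    show ?thesis using u uC lo_car unfolding I_def hi_def
      by (simp add: Tinv L_N_swap N_L_swap)
  qed
  have join_in: "u \<in> I i \<Longrightarrow> v \<in> I j \<Longrightarrow> J u v \<in> I (join T i j)" for u v i j
  proof -
    assume u: "u \<in> I i" and v: "v \<in> I j"
    have uv: "u \<in> CA" "v \<in> CA" using u v by (auto simp: I_def)
    have "N (M (N u) (N v)) \<in> I (neg T (meet T (neg T i) (neg T j)))"
      by (intro neg_in meet_in u v)
    then show ?thesis using uv by (simp add: Tdm)
  qed
  have bot_in: "Z \<in> I (bot T)" using lo_bot hi_car by (simp add: I_def)
  have top_in: "U \<in> I (top T)" using neg_in[OF bot_in] by (simp add: Tbt)
  have BC: "B \<subseteq> CA" by (auto simp: B_def I_def)
  have inB: "u \<in> B \<longleftrightarrow> (\<exists>i. u \<in> I i)" for u by (simp add: B_def)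
  have phiI: "u \<in> B \<Longrightarrow> u \<in> I (phi u)" for u using phi_eq inB by metis
  have phiM: "u \<in> B \<Longrightarrow> v \<in> B \<Longrightarrow> phi (M u v) = meet T (phi u) (phi v)" for u v
    using phiI meet_in phi_eq by metis
  have phiJ: "u \<in> B \<Longrightarrow> v \<in> B \<Longrightarrow> phi (J u v) = join T (phi u) (phi v)" for u v
    using phiI join_in phi_eq by metis
  have phiN: "u \<in> B \<Longrightarrow> phi (N u) = neg T (phi u)" for u
    using phiI neg_in phi_eq by metis
  have phiZ: "phi Z = bot T" using bot_in phi_eq by blast
  have phiU: "phi U = top T" using top_in phi_eq by blast
  have cMB: "u \<in> B \<Longrightarrow> v \<in> B \<Longrightarrow> M u v \<in> B" for u v using phiI meet_in inB by metis
  have cJB: "u \<in> B \<Longrightarrow> v \<in> B \<Longrightarrow> J u v \<in> B" for u v using phiI join_in inB by metis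
  have cNB: "u \<in> B \<Longrightarrow> N u \<in> B" for u using phiI neg_in inB by metis
  have ZB: "Z \<in> B" using bot_in inB by blast
  have UB: "U \<in> B" using top_in inB by blast
  have sub: "subalgebra B A"
    unfolding subalgebra_def closed_ops_def using BC cMB cJB cNB ZB UB by blast
  have surj: "\<exists>u\<in>B. phi u = i" for i using lo_in phi_eq inB by blast
  define \<theta> where "\<theta> = {(u,v). u \<in> B \<and> v \<in> B \<and> phi u = phi v}"
  have eqv: "equiv B \<theta>"
    unfolding equiv_def refl_on_def sym_def trans_def \<theta>_def by auto
  have cong: "congruence (restrict_alg A B) \<theta>"
    unfolding congruence_def using eqv
    by (auto simp: \<theta>_def phiM phiJ phiN cMB cJB cNB)
  define Q where "Q = quotient_alg (restrict_alg A B) \<theta>"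
  define F where "F X = phi (SOME u. u \<in> X)" for X
  have cls: "\<theta> `` {u} = {v \<in> B. phi v = phi u}" if "u \<in> B" for u
    using that by (auto simp: \<theta>_def)
  have F_cls: "F (\<theta> `` {u}) = phi u" if "u \<in> B" for u
  proof -
    have "u \<in> \<theta> `` {u}" using that by (simp add: cls)
    then have "(SOME v. v \<in> \<theta> `` {u}) \<in> \<theta> `` {u}" by (rule someI)
    then show ?thesis using that by (simp add: F_def cls)
  qed
  have some_cls: "(SOME v. v \<in> \<theta> `` {u}) \<in> B \<and> phi (SOME v. v \<in> \<theta> `` {u}) = phi u" if "u \<in> B" for u
  proof -
    have "u \<in> \<theta> `` {u}" using that by (simp add: cls)
    then have "(SOME v. v \<in> \<theta> `` {u}) \<in> \<theta> `` {u}" by (rule someI)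
    then show ?thesis using that by (simp add: cls)
  qed
  have carQ: "carrier Q = B // \<theta>" by (simp add: Q_def quotient_alg_def)
  have Qelem: "X \<in> B // \<theta> \<Longrightarrow> \<exists>u\<in>B. X = \<theta> `` {u}" for X by (auto simp: quotient_def)
  have iso: "iso Q T F"
    unfolding iso_def
  proof (intro conjI ballI)
    show "bij_betw F (carrier Q) (carrier T)"
      unfolding bij_betw_def inj_on_def carQ Tcar
    proof (intro conjI ballI impI)
      fix X Y assume X: "X \<in> B // \<theta>" and Y: "Y \<in> B // \<theta>" and FXY: "F X = F Y"
      obtain u where u: "u \<in> B" "X = \<theta> `` {u}" using Qelem[OF X] by blast
      obtain v where v: "v \<in> B" "Y = \<theta> `` {v}" using Qelem[OF Y] by blast
      have "phi u = phi v" using FXY u v F_cls by simp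
      then show "X = Y" using u v cls by simp
    next
      show "F ` (B // \<theta>) = UNIV"
      proof (rule set_eqI, rule iffI)
        fix i :: 'b assume "i \<in> UNIV"
        obtain u where "u \<in> B" "phi u = i" using surj by blast
        then show "i \<in> F ` (B // \<theta>)"
          using F_cls by (metis image_eqI quotientI)
      qed simp
    qed
  next
    fix X Y assume X: "X \<in> carrier Q" and Y: "Y \<in> carrier Q"
    obtain u where u: "u \<in> B" "X = \<theta> `` {u}" using Qelem X carQ by blast
    obtain v where v: "v \<in> B" "Y = \<theta> `` {v}" using Qelem Y carQ by blast
    let ?su = "SOME w. w \<in> \<theta> `` {u}" and ?sv = "SOME w. w \<in> \<theta> `` {v}"
    have su: "?su \<in> B" "phi ?su = phi u" using some_cls[OF u(1)] by auto
    have sv: "?sv \<in> B" "phi ?sv = phi v" using some_cls[OF v(1)] by auto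
    show "F (meet Q X Y) = meet T (F X) (F Y)"
      using u v su sv by (simp add: Q_def quotient_alg_def F_cls cMB phiM)
    show "F (join Q X Y) = join T (F X) (F Y)"
      using u v su sv by (simp add: Q_def quotient_alg_def F_cls cJB phiJ)
  next
    fix X assume X: "X \<in> carrier Q"
    obtain u where u: "u \<in> B" "X = \<theta> `` {u}" using Qelem X carQ by blast
    let ?su = "SOME w. w \<in> \<theta> `` {u}"
    have su: "?su \<in> B" "phi ?su = phi u" using some_cls[OF u(1)] by auto
    show "F (neg Q X) = neg T (F X)"
      using u su by (simp add: Q_def quotient_alg_def F_cls cNB phiN)
  next
    show "F (bot Q) = bot T" using ZB by (simp add: Q_def quotient_alg_def F_cls phiZ)
    show "F (top Q) = top T" using UB by (simp add: Q_def quotient_alg_def F_cls phiU)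
  qed
  show "\<exists>B \<theta>. subalgebra B A \<and> congruence (restrict_alg A B) \<theta> \<and>
            isomorphic (quotient_alg (restrict_alg A B) \<theta>) T"
    using sub cong iso by (auto simp: Q_def isomorphic_def)
  assume lohi_eq: "\<And>i. N (lo (neg T i)) = lo i"
  have single: "u \<in> I i \<Longrightarrow> u = lo i" for u i
    using lohi_eq lo_car L_antisym by (auto simp: I_def hi_def)
  have "iso (restrict_alg A B) T phi"
    unfolding iso_def
  proof (intro conjI ballI)
    show "bij_betw phi (carrier (restrict_alg A B)) (carrier T)"
      unfolding bij_betw_def inj_on_def Tcar
    proof (intro conjI ballI impI)
      fix u v assume "u \<in> carrier (restrict_alg A B)" "v \<in> carrier (restrict_alg A B)" "phi u = phi v"
      then show "u = v" using phiI single by (metis restrict_simps(6))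
    next
      show "phi ` carrier (restrict_alg A B) = UNIV"
      proof (rule set_eqI)
        fix i show "i \<in> phi ` carrier (restrict_alg A B) \<longleftrightarrow> i \<in> UNIV" using surj[of i] by force
      qed
    qed
  qed (auto simp: phiM phiJ phiN phiZ phiU)
  then show "\<exists>B. subalgebra B A \<and> isomorphic (restrict_alg A B) T"
    using sub by (auto simp: isomorphic_def)
qed

theorem interval_main:
  fixes T :: "'b pkl" and lo :: "'b \<Rightarrow> 'a" and Cv Inc K
  assumes good: "goodT T"
  and Tord: "\<And>i j. leq T i j \<longleftrightarrow> (i,j) \<in> Cv\<^sup>*"
  and lo_car: "\<And>i. lo i \<in> CA"
  and lo_bot: "lo (bot T) = Z"
  and cov: "\<And>i j. (i,j) \<in> Cv \<Longrightarrow> L (lo i) (lo j)"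
  and inc: "\<And>i j. \<not> leq T i j \<Longrightarrow> \<not> leq T j i \<Longrightarrow> (i,j) \<in> Inc"
  and himeet: "\<And>i j. (i,j) \<in> Inc \<Longrightarrow>
        L (M (N (lo (neg T i))) (N (lo (neg T j)))) (N (lo (neg T (meet T i j))))"
  and lohi: "\<And>i. L (lo i) (N (lo (neg T i)))"
  and keys: "\<And>i j. \<not> leq T i j \<Longrightarrow> \<exists>pq\<in>K. (leq T (fst pq) i \<and> leq T j (snd pq)) \<or>
                 (leq T (neg T (snd pq)) i \<and> leq T j (neg T (fst pq)))"
  and keyA: "\<And>p q. (p,q) \<in> K \<Longrightarrow> \<not> L (lo p) (N (lo (neg T q)))"
  shows "\<exists>B \<theta>. subalgebra B A \<and> congruence (restrict_alg A B) \<theta> \<and>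
            isomorphic (quotient_alg (restrict_alg A B) \<theta>) T"
    and "(\<And>i. N (lo (neg T i)) = lo i) \<Longrightarrow> \<exists>B. subalgebra B A \<and> isomorphic (restrict_alg A B) T"
proof -
  have G: "carrier T = UNIV" "\<And>i j. meet T i j = meet T j i" "\<And>i j. leq T (meet T i j) i"
    "\<And>i j. leq T i j \<Longrightarrow> leq T j i \<Longrightarrow> i = j" "\<And>i. neg T (neg T i) = i"
    "\<And>i j. join T i j = neg T (meet T (neg T i) (neg T j))" "top T = neg T (bot T)"
    "\<And>i j. leq T i j \<Longrightarrow> leq T (neg T j) (neg T i)"
    using good unfolding goodT_def by blast+
  have mono: "L (lo i) (lo j)" if "leq T i j" for i j
  proof -
    have "(i,j) \<in> Cv\<^sup>*" using that Tord by blast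
    then show ?thesis
    proof (induction rule: rtrancl_induct)
      case base then show ?case using lo_car by simp
    next
      case (step y z) then show ?case using cov L_trans lo_car by blast
    qed
  qed
  have himono: "L (N (lo (neg T i))) (N (lo (neg T j)))" if "leq T i j" for i j
    using mono[OF G(8)[OF that]] lo_car by simp
  have disj: "\<not> L (lo i) (N (lo (neg T j)))" if ij: "\<not> leq T i j" for i j
  proof
    assume H: "L (lo i) (N (lo (neg T j)))"
    obtain p q where pq: "(p,q) \<in> K" and
      c: "(leq T p i \<and> leq T j q) \<or> (leq T (neg T q) i \<and> leq T j (neg T p))"
      using keys[OF ij] by auto
    show False using c
    proof
      assume c1: "leq T p i \<and> leq T j q"
      have "L (lo p) (N (lo (neg T q)))"
        using mono[of p i] himono[of j q] c1 H L_trans lo_car by (meson cN)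
      then show False using keyA[OF pq] by simp
    next
      assume c2: "leq T (neg T q) i \<and> leq T j (neg T p)"
      have "L (lo (neg T q)) (N (lo (neg T (neg T p))))"
        using mono[of "neg T q" i] himono[of j "neg T p"] c2 H L_trans lo_car by (meson cN)
      then have "L (lo p) (N (lo (neg T q)))" using lo_car G(5) by (simp add: L_N_swap)
      then show False using keyA[OF pq] by simp
    qed
  qed
  have himeet': "\<And>i j. \<not> leq T i j \<Longrightarrow> \<not> leq T j i \<Longrightarrow>
        L (M (N (lo (neg T i))) (N (lo (neg T j)))) (N (lo (neg T (meet T i j))))"
    using himeet inc by blast
  show "\<exists>B \<theta>. subalgebra B A \<and> congruence (restrict_alg A B) \<theta> \<and>
            isomorphic (quotient_alg (restrict_alg A B) \<theta>) T"
    by (rule interval_construction(1)[OF G(1-7) lo_car lo_bot mono himeet' lohi disj])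
  show "(\<And>i. N (lo (neg T i)) = lo i) \<Longrightarrow> \<exists>B. subalgebra B A \<and> isomorphic (restrict_alg A B) T"
    by (rule interval_construction(2)[OF G(1-7) lo_car lo_bot mono himeet' lohi disj])
qed

end

lemma chain_step: "(a,b) \<in> r \<Longrightarrow> (b,c) \<in> r\<^sup>* \<Longrightarrow> (a,c) \<in> r\<^sup>*" by (rule converse_rtrancl_into_rtrancl)

lemma glb_eqI:
  assumes ord: "\<And>u v. ord_of C u v \<longleftrightarrow> le u v" and anti: "\<And>u v. le u v \<Longrightarrow> le v u \<Longrightarrow> u = v"
    and "le z i" "le z j" "\<forall>w. le w i \<and> le w j \<longrightarrow> le w z"
  shows "glb_of C i j = z"
  unfolding glb_of_def ord
  by (rule the_equality) (use assms in blast)+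

lemma lub_eqI:
  assumes ord: "\<And>u v. ord_of C u v \<longleftrightarrow> le u v" and anti: "\<And>u v. le u v \<Longrightarrow> le v u \<Longrightarrow> u = v"
    and "le i z" "le j z" "\<forall>w. le i w \<and> le j w \<longrightarrow> le z w"
  shows "lub_of C i j = z"
  unfolding lub_of_def ord
  by (rule the_equality) (use assms in blast)+
abbreviation "C_B6 \<equiv> {(B6_0, B6_x), (B6_x, B6_y), (B6_y, B6_1), (B6_0, B6_y'), (B6_y', B6_x'), (B6_x', B6_1)}"

definition le_B6 :: "b6 \<Rightarrow> b6 \<Rightarrow> bool" where
  "le_B6 i j \<longleftrightarrow> (i,j) \<in> {(B6_0,B6_0), (B6_0,B6_x), (B6_0,B6_y), (B6_0,B6_y'), (B6_0,B6_x'), (B6_0,B6_1), (B6_x,B6_x), (B6_x,B6_y), (B6_x,B6_1), (B6_y,B6_y), (B6_y,B6_1), (B6_y',B6_y'), (B6_y',B6_x'), (B6_y',B6_1), (B6_x',B6_x'), (B6_x',B6_1), (B6_1,B6_1)}"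

lemma all_B6: "(\<forall>w::b6. P w) \<longleftrightarrow> P B6_0 \<and> P B6_x \<and> P B6_y \<and> P B6_y' \<and> P B6_x' \<and> P B6_1"
  by (metis b6.exhaust)

lemma ex_B6: "(\<exists>w::b6. P w) \<longleftrightarrow> P B6_0 \<or> P B6_x \<or> P B6_y \<or> P B6_y' \<or> P B6_x' \<or> P B6_1"
  by (metis b6.exhaust)

lemma ch_B6_0_1: "(B6_0, B6_x) \<in> C_B6\<^sup>*"
  by (rule r_into_rtrancl, simp)

lemma ch_B6_0_2: "(B6_0, B6_y) \<in> C_B6\<^sup>*"
  by (rule chain_step[of B6_0 B6_x], simp, rule r_into_rtrancl, simp)

lemma ch_B6_0_3: "(B6_0, B6_y') \<in> C_B6\<^sup>*"
  by (rule r_into_rtrancl, simp)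

lemma ch_B6_0_4: "(B6_0, B6_x') \<in> C_B6\<^sup>*"
  by (rule chain_step[of B6_0 B6_y'], simp, rule r_into_rtrancl, simp)

lemma ch_B6_0_5: "(B6_0, B6_1) \<in> C_B6\<^sup>*"
  by (rule chain_step[of B6_0 B6_x], simp, rule chain_step[of B6_x B6_y], simp, rule r_into_rtrancl, simp)

lemma ch_B6_1_2: "(B6_x, B6_y) \<in> C_B6\<^sup>*"
  by (rule r_into_rtrancl, simp)

lemma ch_B6_1_5: "(B6_x, B6_1) \<in> C_B6\<^sup>*"
  by (rule chain_step[of B6_x B6_y], simp, rule r_into_rtrancl, simp)

lemma ch_B6_2_5: "(B6_y, B6_1) \<in> C_B6\<^sup>*"
  by (rule r_into_rtrancl, simp)

lemma ch_B6_3_4: "(B6_y', B6_x') \<in> C_B6\<^sup>*"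
  by (rule r_into_rtrancl, simp)

lemma ch_B6_3_5: "(B6_y', B6_1) \<in> C_B6\<^sup>*"
  by (rule chain_step[of B6_y' B6_x'], simp, rule r_into_rtrancl, simp)

lemma ch_B6_4_5: "(B6_x', B6_1) \<in> C_B6\<^sup>*"
  by (rule r_into_rtrancl, simp)

lemma le_step_B6: "(y,z) \<in> C_B6 \<Longrightarrow> le_B6 i y \<Longrightarrow> le_B6 i z"
  by (cases i; cases y; cases z; simp add: le_B6_def)

lemma ord_B6: "ord_of C_B6 i j \<longleftrightarrow> le_B6 i j"
proof
  assume "ord_of C_B6 i j"
  then have "(i,j) \<in> C_B6\<^sup>*" by (simp add: ord_of_def)
  then show "le_B6 i j"
  proof (induction rule: rtrancl_induct)
    case base then show ?case by (cases i) (simp_all add: le_B6_def)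
  next
    case (step y z) then show ?case using le_step_B6 by blast
  qed
next
  assume "le_B6 i j"
  then show "ord_of C_B6 i j" unfolding ord_of_def
    by (cases i; cases j; simp add: le_B6_def ch_B6_0_1 ch_B6_0_2 ch_B6_0_3 ch_B6_0_4 ch_B6_0_5 ch_B6_1_2 ch_B6_1_5 ch_B6_2_5 ch_B6_3_4 ch_B6_3_5 ch_B6_4_5)
qed

lemma antisym_B6: "le_B6 i j \<Longrightarrow> le_B6 j i \<Longrightarrow> i = j"
  by (cases i; cases j; simp add: le_B6_def)

lemma glb_B6:
  "glb_of C_B6 B6_0 B6_0 = B6_0"
  "glb_of C_B6 B6_0 B6_x = B6_0"
  "glb_of C_B6 B6_0 B6_y = B6_0"
  "glb_of C_B6 B6_0 B6_y' = B6_0"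
  "glb_of C_B6 B6_0 B6_x' = B6_0"
  "glb_of C_B6 B6_0 B6_1 = B6_0"
  "glb_of C_B6 B6_x B6_0 = B6_0"
  "glb_of C_B6 B6_x B6_x = B6_x"
  "glb_of C_B6 B6_x B6_y = B6_x"
  "glb_of C_B6 B6_x B6_y' = B6_0"
  "glb_of C_B6 B6_x B6_x' = B6_0"
  "glb_of C_B6 B6_x B6_1 = B6_x"
  "glb_of C_B6 B6_y B6_0 = B6_0"
  "glb_of C_B6 B6_y B6_x = B6_x"
  "glb_of C_B6 B6_y B6_y = B6_y"
  "glb_of C_B6 B6_y B6_y' = B6_0"
  "glb_of C_B6 B6_y B6_x' = B6_0"
  "glb_of C_B6 B6_y B6_1 = B6_y"
  "glb_of C_B6 B6_y' B6_0 = B6_0"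
  "glb_of C_B6 B6_y' B6_x = B6_0"
  "glb_of C_B6 B6_y' B6_y = B6_0"
  "glb_of C_B6 B6_y' B6_y' = B6_y'"
  "glb_of C_B6 B6_y' B6_x' = B6_y'"
  "glb_of C_B6 B6_y' B6_1 = B6_y'"
  "glb_of C_B6 B6_x' B6_0 = B6_0"
  "glb_of C_B6 B6_x' B6_x = B6_0"
  "glb_of C_B6 B6_x' B6_y = B6_0"
  "glb_of C_B6 B6_x' B6_y' = B6_y'"
  "glb_of C_B6 B6_x' B6_x' = B6_x'"
  "glb_of C_B6 B6_x' B6_1 = B6_x'"
  "glb_of C_B6 B6_1 B6_0 = B6_0"
  "glb_of C_B6 B6_1 B6_x = B6_x"
  "glb_of C_B6 B6_1 B6_y = B6_y"
  "glb_of C_B6 B6_1 B6_y' = B6_y'"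
  "glb_of C_B6 B6_1 B6_x' = B6_x'"
  "glb_of C_B6 B6_1 B6_1 = B6_1"
  by (rule glb_eqI[OF ord_B6 antisym_B6]; simp add: le_B6_def all_B6)+

lemma lub_B6:
  "lub_of C_B6 B6_0 B6_0 = B6_0"
  "lub_of C_B6 B6_0 B6_x = B6_x"
  "lub_of C_B6 B6_0 B6_y = B6_y"
  "lub_of C_B6 B6_0 B6_y' = B6_y'"
  "lub_of C_B6 B6_0 B6_x' = B6_x'"
  "lub_of C_B6 B6_0 B6_1 = B6_1"
  "lub_of C_B6 B6_x B6_0 = B6_x"
  "lub_of C_B6 B6_x B6_x = B6_x"
  "lub_of C_B6 B6_x B6_y = B6_y"
  "lub_of C_B6 B6_x B6_y' = B6_1"
  "lub_of C_B6 B6_x B6_x' = B6_1"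
  "lub_of C_B6 B6_x B6_1 = B6_1"
  "lub_of C_B6 B6_y B6_0 = B6_y"
  "lub_of C_B6 B6_y B6_x = B6_y"
  "lub_of C_B6 B6_y B6_y = B6_y"
  "lub_of C_B6 B6_y B6_y' = B6_1"
  "lub_of C_B6 B6_y B6_x' = B6_1"
  "lub_of C_B6 B6_y B6_1 = B6_1"
  "lub_of C_B6 B6_y' B6_0 = B6_y'"
  "lub_of C_B6 B6_y' B6_x = B6_1"
  "lub_of C_B6 B6_y' B6_y = B6_1"
  "lub_of C_B6 B6_y' B6_y' = B6_y'"
  "lub_of C_B6 B6_y' B6_x' = B6_x'"
  "lub_of C_B6 B6_y' B6_1 = B6_1"
  "lub_of C_B6 B6_x' B6_0 = B6_x'"
  "lub_of C_B6 B6_x' B6_x = B6_1"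
  "lub_of C_B6 B6_x' B6_y = B6_1"
  "lub_of C_B6 B6_x' B6_y' = B6_x'"
  "lub_of C_B6 B6_x' B6_x' = B6_x'"
  "lub_of C_B6 B6_x' B6_1 = B6_1"
  "lub_of C_B6 B6_1 B6_0 = B6_1"
  "lub_of C_B6 B6_1 B6_x = B6_1"
  "lub_of C_B6 B6_1 B6_y = B6_1"
  "lub_of C_B6 B6_1 B6_y' = B6_1"
  "lub_of C_B6 B6_1 B6_x' = B6_1"
  "lub_of C_B6 B6_1 B6_1 = B6_1"
  by (rule lub_eqI[OF ord_B6 antisym_B6]; simp add: le_B6_def all_B6)+

lemma B6_simps[simp]: "carrier B6 = UNIV" "meet B6 = glb_of C_B6" "join B6 = lub_of C_B6" "neg B6 = neg6" "bot B6 = B6_0" "top B6 = B6_1"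
  by (simp_all add: B6_def alg_of_def)

lemma leq_B6: "leq B6 i j \<longleftrightarrow> le_B6 i j"
  by (cases i; cases j; simp add: leq_def glb_B6 le_B6_def)

lemma ord2_B6: "leq B6 i j \<longleftrightarrow> (i,j) \<in> C_B6\<^sup>*"
  using ord_B6[of i j] by (simp add: leq_B6 ord_of_def)

lemma Tcomm_B6: "glb_of C_B6 i j = glb_of C_B6 j i" by (cases i; cases j; simp add: glb_B6)
lemma Tlow_B6: "le_B6 (glb_of C_B6 i j) i" by (cases i; cases j; simp add: glb_B6 le_B6_def)
lemma Tinv_B6: "neg6 (neg6 i) = i" by (cases i) simp_all
lemma Tdm_B6: "lub_of C_B6 i j = neg6 (glb_of C_B6 (neg6 i) (neg6 j))" by (cases i; cases j; simp add: glb_B6 lub_B6)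
lemma Tnanti_B6: "le_B6 i j \<Longrightarrow> le_B6 (neg6 j) (neg6 i)" by (cases i; cases j; simp add: le_B6_def)
lemma good_B6: "goodT B6"
  unfolding goodT_def by (auto simp: leq_B6 Tcomm_B6 Tlow_B6 Tinv_B6 Tdm_B6 Tnanti_B6 intro: antisym_B6)

definition Inc_B6 :: "(b6 \<times> b6) set" where "Inc_B6 = {(B6_x,B6_y'), (B6_x,B6_x'), (B6_y,B6_y'), (B6_y,B6_x'), (B6_y',B6_x), (B6_y',B6_y), (B6_x',B6_x), (B6_x',B6_y)}"

definition K_B6 :: "(b6 \<times> b6) set" where "K_B6 = {(B6_x,B6_y'), (B6_x,B6_x'), (B6_y,B6_x), (B6_y,B6_y'), (B6_y',B6_x), (B6_y',B6_y), (B6_x',B6_x)}"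

lemma inc_B6: "\<not> leq B6 i j \<Longrightarrow> \<not> leq B6 j i \<Longrightarrow> (i,j) \<in> Inc_B6"
  by (cases i; cases j; simp add: leq_B6 le_B6_def Inc_B6_def)

lemma keys_B6: "\<not> leq B6 i j \<Longrightarrow> \<exists>pq\<in>K_B6. (leq B6 (fst pq) i \<and> leq B6 j (snd pq)) \<or> (leq B6 (neg B6 (snd pq)) i \<and> leq B6 j (neg B6 (fst pq)))"
  by (cases i; cases j; simp add: leq_B6 le_B6_def K_B6_def)

abbreviation "C_B8 \<equiv> {(B8_0, B8_z'), (B8_z', B8_x), (B8_x, B8_y), (B8_y, B8_z), (B8_z', B8_y'), (B8_y', B8_x'), (B8_x', B8_z), (B8_z, B8_1)}"

definition le_B8 :: "b8 \<Rightarrow> b8 \<Rightarrow> bool" where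
  "le_B8 i j \<longleftrightarrow> (i,j) \<in> {(B8_0,B8_0), (B8_0,B8_z'), (B8_0,B8_x), (B8_0,B8_y), (B8_0,B8_y'), (B8_0,B8_x'), (B8_0,B8_z), (B8_0,B8_1), (B8_z',B8_z'), (B8_z',B8_x), (B8_z',B8_y), (B8_z',B8_y'), (B8_z',B8_x'), (B8_z',B8_z), (B8_z',B8_1), (B8_x,B8_x), (B8_x,B8_y), (B8_x,B8_z), (B8_x,B8_1), (B8_y,B8_y), (B8_y,B8_z), (B8_y,B8_1), (B8_y',B8_y'), (B8_y',B8_x'), (B8_y',B8_z), (B8_y',B8_1), (B8_x',B8_x'), (B8_x',B8_z), (B8_x',B8_1), (B8_z,B8_z), (B8_z,B8_1), (B8_1,B8_1)}"

lemma all_B8: "(\<forall>w::b8. P w) \<longleftrightarrow> P B8_0 \<and> P B8_z' \<and> P B8_x \<and> P B8_y \<and> P B8_y' \<and> P B8_x' \<and> P B8_z \<and> P B8_1"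
  by (metis b8.exhaust)

lemma ex_B8: "(\<exists>w::b8. P w) \<longleftrightarrow> P B8_0 \<or> P B8_z' \<or> P B8_x \<or> P B8_y \<or> P B8_y' \<or> P B8_x' \<or> P B8_z \<or> P B8_1"
  by (metis b8.exhaust)

lemma ch_B8_0_1: "(B8_0, B8_z') \<in> C_B8\<^sup>*"
  by (rule r_into_rtrancl, simp)

lemma ch_B8_0_2: "(B8_0, B8_x) \<in> C_B8\<^sup>*"
  by (rule chain_step[of B8_0 B8_z'], simp, rule r_into_rtrancl, simp)

lemma ch_B8_0_3: "(B8_0, B8_y) \<in> C_B8\<^sup>*"
  by (rule chain_step[of B8_0 B8_z'], simp, rule chain_step[of B8_z' B8_x], simp, rule r_into_rtrancl, simp)

lemma ch_B8_0_4: "(B8_0, B8_y') \<in> C_B8\<^sup>*"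
  by (rule chain_step[of B8_0 B8_z'], simp, rule r_into_rtrancl, simp)

lemma ch_B8_0_5: "(B8_0, B8_x') \<in> C_B8\<^sup>*"
  by (rule chain_step[of B8_0 B8_z'], simp, rule chain_step[of B8_z' B8_y'], simp, rule r_into_rtrancl, simp)

lemma ch_B8_0_6: "(B8_0, B8_z) \<in> C_B8\<^sup>*"
  by (rule chain_step[of B8_0 B8_z'], simp, rule chain_step[of B8_z' B8_x], simp, rule chain_step[of B8_x B8_y], simp, rule r_into_rtrancl, simp)

lemma ch_B8_0_7: "(B8_0, B8_1) \<in> C_B8\<^sup>*"
  by (rule chain_step[of B8_0 B8_z'], simp, rule chain_step[of B8_z' B8_x], simp, rule chain_step[of B8_x B8_y], simp, rule chain_step[of B8_y B8_z], simp, rule r_into_rtrancl, simp)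

lemma ch_B8_1_2: "(B8_z', B8_x) \<in> C_B8\<^sup>*"
  by (rule r_into_rtrancl, simp)

lemma ch_B8_1_3: "(B8_z', B8_y) \<in> C_B8\<^sup>*"
  by (rule chain_step[of B8_z' B8_x], simp, rule r_into_rtrancl, simp)

lemma ch_B8_1_4: "(B8_z', B8_y') \<in> C_B8\<^sup>*"
  by (rule r_into_rtrancl, simp)

lemma ch_B8_1_5: "(B8_z', B8_x') \<in> C_B8\<^sup>*"
  by (rule chain_step[of B8_z' B8_y'], simp, rule r_into_rtrancl, simp)

lemma ch_B8_1_6: "(B8_z', B8_z) \<in> C_B8\<^sup>*"
  by (rule chain_step[of B8_z' B8_x], simp, rule chain_step[of B8_x B8_y], simp, rule r_into_rtrancl, simp)

lemma ch_B8_1_7: "(B8_z', B8_1) \<in> C_B8\<^sup>*"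
  by (rule chain_step[of B8_z' B8_x], simp, rule chain_step[of B8_x B8_y], simp, rule chain_step[of B8_y B8_z], simp, rule r_into_rtrancl, simp)

lemma ch_B8_2_3: "(B8_x, B8_y) \<in> C_B8\<^sup>*"
  by (rule r_into_rtrancl, simp)

lemma ch_B8_2_6: "(B8_x, B8_z) \<in> C_B8\<^sup>*"
  by (rule chain_step[of B8_x B8_y], simp, rule r_into_rtrancl, simp)

lemma ch_B8_2_7: "(B8_x, B8_1) \<in> C_B8\<^sup>*"
  by (rule chain_step[of B8_x B8_y], simp, rule chain_step[of B8_y B8_z], simp, rule r_into_rtrancl, simp)

lemma ch_B8_3_6: "(B8_y, B8_z) \<in> C_B8\<^sup>*"
  by (rule r_into_rtrancl, simp)

lemma ch_B8_3_7: "(B8_y, B8_1) \<in> C_B8\<^sup>*"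
  by (rule chain_step[of B8_y B8_z], simp, rule r_into_rtrancl, simp)

lemma ch_B8_4_5: "(B8_y', B8_x') \<in> C_B8\<^sup>*"
  by (rule r_into_rtrancl, simp)

lemma ch_B8_4_6: "(B8_y', B8_z) \<in> C_B8\<^sup>*"
  by (rule chain_step[of B8_y' B8_x'], simp, rule r_into_rtrancl, simp)

lemma ch_B8_4_7: "(B8_y', B8_1) \<in> C_B8\<^sup>*"
  by (rule chain_step[of B8_y' B8_x'], simp, rule chain_step[of B8_x' B8_z], simp, rule r_into_rtrancl, simp)

lemma ch_B8_5_6: "(B8_x', B8_z) \<in> C_B8\<^sup>*"
  by (rule r_into_rtrancl, simp)

lemma ch_B8_5_7: "(B8_x', B8_1) \<in> C_B8\<^sup>*"
  by (rule chain_step[of B8_x' B8_z], simp, rule r_into_rtrancl, simp)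

lemma ch_B8_6_7: "(B8_z, B8_1) \<in> C_B8\<^sup>*"
  by (rule r_into_rtrancl, simp)

lemma le_step_B8: "(y,z) \<in> C_B8 \<Longrightarrow> le_B8 i y \<Longrightarrow> le_B8 i z"
  by (cases i; cases y; cases z; simp add: le_B8_def)

lemma ord_B8: "ord_of C_B8 i j \<longleftrightarrow> le_B8 i j"
proof
  assume "ord_of C_B8 i j"
  then have "(i,j) \<in> C_B8\<^sup>*" by (simp add: ord_of_def)
  then show "le_B8 i j"
  proof (induction rule: rtrancl_induct)
    case base then show ?case by (cases i) (simp_all add: le_B8_def)
  next
    case (step y z) then show ?case using le_step_B8 by blast
  qed
next
  assume "le_B8 i j"
  then show "ord_of C_B8 i j" unfolding ord_of_def
    by (cases i; cases j; simp add: le_B8_def ch_B8_0_1 ch_B8_0_2 ch_B8_0_3 ch_B8_0_4 ch_B8_0_5 ch_B8_0_6 ch_B8_0_7 ch_B8_1_2 ch_B8_1_3 ch_B8_1_4 ch_B8_1_5 ch_B8_1_6 ch_B8_1_7 ch_B8_2_3 ch_B8_2_6 ch_B8_2_7 ch_B8_3_6 ch_B8_3_7 ch_B8_4_5 ch_B8_4_6 ch_B8_4_7 ch_B8_5_6 ch_B8_5_7 ch_B8_6_7)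
qed

lemma antisym_B8: "le_B8 i j \<Longrightarrow> le_B8 j i \<Longrightarrow> i = j"
  by (cases i; cases j; simp add: le_B8_def)

lemma glb_B8:
  "glb_of C_B8 B8_0 B8_0 = B8_0"
  "glb_of C_B8 B8_0 B8_z' = B8_0"
  "glb_of C_B8 B8_0 B8_x = B8_0"
  "glb_of C_B8 B8_0 B8_y = B8_0"
  "glb_of C_B8 B8_0 B8_y' = B8_0"
  "glb_of C_B8 B8_0 B8_x' = B8_0"
  "glb_of C_B8 B8_0 B8_z = B8_0"
  "glb_of C_B8 B8_0 B8_1 = B8_0"
  "glb_of C_B8 B8_z' B8_0 = B8_0"
  "glb_of C_B8 B8_z' B8_z' = B8_z'"
  "glb_of C_B8 B8_z' B8_x = B8_z'"
  "glb_of C_B8 B8_z' B8_y = B8_z'"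
  "glb_of C_B8 B8_z' B8_y' = B8_z'"
  "glb_of C_B8 B8_z' B8_x' = B8_z'"
  "glb_of C_B8 B8_z' B8_z = B8_z'"
  "glb_of C_B8 B8_z' B8_1 = B8_z'"
  "glb_of C_B8 B8_x B8_0 = B8_0"
  "glb_of C_B8 B8_x B8_z' = B8_z'"
  "glb_of C_B8 B8_x B8_x = B8_x"
  "glb_of C_B8 B8_x B8_y = B8_x"
  "glb_of C_B8 B8_x B8_y' = B8_z'"
  "glb_of C_B8 B8_x B8_x' = B8_z'"
  "glb_of C_B8 B8_x B8_z = B8_x"
  "glb_of C_B8 B8_x B8_1 = B8_x"
  "glb_of C_B8 B8_y B8_0 = B8_0"
  "glb_of C_B8 B8_y B8_z' = B8_z'"
  "glb_of C_B8 B8_y B8_x = B8_x"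
  "glb_of C_B8 B8_y B8_y = B8_y"
  "glb_of C_B8 B8_y B8_y' = B8_z'"
  "glb_of C_B8 B8_y B8_x' = B8_z'"
  "glb_of C_B8 B8_y B8_z = B8_y"
  "glb_of C_B8 B8_y B8_1 = B8_y"
  "glb_of C_B8 B8_y' B8_0 = B8_0"
  "glb_of C_B8 B8_y' B8_z' = B8_z'"
  "glb_of C_B8 B8_y' B8_x = B8_z'"
  "glb_of C_B8 B8_y' B8_y = B8_z'"
  "glb_of C_B8 B8_y' B8_y' = B8_y'"
  "glb_of C_B8 B8_y' B8_x' = B8_y'"
  "glb_of C_B8 B8_y' B8_z = B8_y'"
  "glb_of C_B8 B8_y' B8_1 = B8_y'"
  "glb_of C_B8 B8_x' B8_0 = B8_0"
  "glb_of C_B8 B8_x' B8_z' = B8_z'"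
  "glb_of C_B8 B8_x' B8_x = B8_z'"
  "glb_of C_B8 B8_x' B8_y = B8_z'"
  "glb_of C_B8 B8_x' B8_y' = B8_y'"
  "glb_of C_B8 B8_x' B8_x' = B8_x'"
  "glb_of C_B8 B8_x' B8_z = B8_x'"
  "glb_of C_B8 B8_x' B8_1 = B8_x'"
  "glb_of C_B8 B8_z B8_0 = B8_0"
  "glb_of C_B8 B8_z B8_z' = B8_z'"
  "glb_of C_B8 B8_z B8_x = B8_x"
  "glb_of C_B8 B8_z B8_y = B8_y"
  "glb_of C_B8 B8_z B8_y' = B8_y'"
  "glb_of C_B8 B8_z B8_x' = B8_x'"
  "glb_of C_B8 B8_z B8_z = B8_z"
  "glb_of C_B8 B8_z B8_1 = B8_z"
  "glb_of C_B8 B8_1 B8_0 = B8_0"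
  "glb_of C_B8 B8_1 B8_z' = B8_z'"
  "glb_of C_B8 B8_1 B8_x = B8_x"
  "glb_of C_B8 B8_1 B8_y = B8_y"
  "glb_of C_B8 B8_1 B8_y' = B8_y'"
  "glb_of C_B8 B8_1 B8_x' = B8_x'"
  "glb_of C_B8 B8_1 B8_z = B8_z"
  "glb_of C_B8 B8_1 B8_1 = B8_1"
  by (rule glb_eqI[OF ord_B8 antisym_B8]; simp add: le_B8_def all_B8)+

lemma lub_B8:
  "lub_of C_B8 B8_0 B8_0 = B8_0"
  "lub_of C_B8 B8_0 B8_z' = B8_z'"
  "lub_of C_B8 B8_0 B8_x = B8_x"
  "lub_of C_B8 B8_0 B8_y = B8_y"
  "lub_of C_B8 B8_0 B8_y' = B8_y'"
  "lub_of C_B8 B8_0 B8_x' = B8_x'"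
  "lub_of C_B8 B8_0 B8_z = B8_z"
  "lub_of C_B8 B8_0 B8_1 = B8_1"
  "lub_of C_B8 B8_z' B8_0 = B8_z'"
  "lub_of C_B8 B8_z' B8_z' = B8_z'"
  "lub_of C_B8 B8_z' B8_x = B8_x"
  "lub_of C_B8 B8_z' B8_y = B8_y"
  "lub_of C_B8 B8_z' B8_y' = B8_y'"
  "lub_of C_B8 B8_z' B8_x' = B8_x'"
  "lub_of C_B8 B8_z' B8_z = B8_z"
  "lub_of C_B8 B8_z' B8_1 = B8_1"
  "lub_of C_B8 B8_x B8_0 = B8_x"
  "lub_of C_B8 B8_x B8_z' = B8_x"
  "lub_of C_B8 B8_x B8_x = B8_x"
  "lub_of C_B8 B8_x B8_y = B8_y"
  "lub_of C_B8 B8_x B8_y' = B8_z"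
  "lub_of C_B8 B8_x B8_x' = B8_z"
  "lub_of C_B8 B8_x B8_z = B8_z"
  "lub_of C_B8 B8_x B8_1 = B8_1"
  "lub_of C_B8 B8_y B8_0 = B8_y"
  "lub_of C_B8 B8_y B8_z' = B8_y"
  "lub_of C_B8 B8_y B8_x = B8_y"
  "lub_of C_B8 B8_y B8_y = B8_y"
  "lub_of C_B8 B8_y B8_y' = B8_z"
  "lub_of C_B8 B8_y B8_x' = B8_z"
  "lub_of C_B8 B8_y B8_z = B8_z"
  "lub_of C_B8 B8_y B8_1 = B8_1"
  "lub_of C_B8 B8_y' B8_0 = B8_y'"
  "lub_of C_B8 B8_y' B8_z' = B8_y'"
  "lub_of C_B8 B8_y' B8_x = B8_z"
  "lub_of C_B8 B8_y' B8_y = B8_z"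
  "lub_of C_B8 B8_y' B8_y' = B8_y'"
  "lub_of C_B8 B8_y' B8_x' = B8_x'"
  "lub_of C_B8 B8_y' B8_z = B8_z"
  "lub_of C_B8 B8_y' B8_1 = B8_1"
  "lub_of C_B8 B8_x' B8_0 = B8_x'"
  "lub_of C_B8 B8_x' B8_z' = B8_x'"
  "lub_of C_B8 B8_x' B8_x = B8_z"
  "lub_of C_B8 B8_x' B8_y = B8_z"
  "lub_of C_B8 B8_x' B8_y' = B8_x'"
  "lub_of C_B8 B8_x' B8_x' = B8_x'"
  "lub_of C_B8 B8_x' B8_z = B8_z"
  "lub_of C_B8 B8_x' B8_1 = B8_1"
  "lub_of C_B8 B8_z B8_0 = B8_z"
  "lub_of C_B8 B8_z B8_z' = B8_z"
  "lub_of C_B8 B8_z B8_x = B8_z"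
  "lub_of C_B8 B8_z B8_y = B8_z"
  "lub_of C_B8 B8_z B8_y' = B8_z"
  "lub_of C_B8 B8_z B8_x' = B8_z"
  "lub_of C_B8 B8_z B8_z = B8_z"
  "lub_of C_B8 B8_z B8_1 = B8_1"
  "lub_of C_B8 B8_1 B8_0 = B8_1"
  "lub_of C_B8 B8_1 B8_z' = B8_1"
  "lub_of C_B8 B8_1 B8_x = B8_1"
  "lub_of C_B8 B8_1 B8_y = B8_1"
  "lub_of C_B8 B8_1 B8_y' = B8_1"
  "lub_of C_B8 B8_1 B8_x' = B8_1"
  "lub_of C_B8 B8_1 B8_z = B8_1"
  "lub_of C_B8 B8_1 B8_1 = B8_1"
  by (rule lub_eqI[OF ord_B8 antisym_B8]; simp add: le_B8_def all_B8)+

lemma B8_simps[simp]: "carrier B8 = UNIV" "meet B8 = glb_of C_B8" "join B8 = lub_of C_B8" "neg B8 = neg8" "bot B8 = B8_0" "top B8 = B8_1"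
  by (simp_all add: B8_def alg_of_def)

lemma leq_B8: "leq B8 i j \<longleftrightarrow> le_B8 i j"
  by (cases i; cases j; simp add: leq_def glb_B8 le_B8_def)

lemma ord2_B8: "leq B8 i j \<longleftrightarrow> (i,j) \<in> C_B8\<^sup>*"
  using ord_B8[of i j] by (simp add: leq_B8 ord_of_def)

lemma Tcomm_B8: "glb_of C_B8 i j = glb_of C_B8 j i" by (cases i; cases j; simp add: glb_B8)
lemma Tlow_B8: "le_B8 (glb_of C_B8 i j) i" by (cases i; cases j; simp add: glb_B8 le_B8_def)
lemma Tinv_B8: "neg8 (neg8 i) = i" by (cases i) simp_all
lemma Tdm_B8: "lub_of C_B8 i j = neg8 (glb_of C_B8 (neg8 i) (neg8 j))" by (cases i; cases j; simp add: glb_B8 lub_B8)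
lemma Tnanti_B8: "le_B8 i j \<Longrightarrow> le_B8 (neg8 j) (neg8 i)" by (cases i; cases j; simp add: le_B8_def)
lemma good_B8: "goodT B8"
  unfolding goodT_def by (auto simp: leq_B8 Tcomm_B8 Tlow_B8 Tinv_B8 Tdm_B8 Tnanti_B8 intro: antisym_B8)

definition Inc_B8 :: "(b8 \<times> b8) set" where "Inc_B8 = {(B8_x,B8_y'), (B8_x,B8_x'), (B8_y,B8_y'), (B8_y,B8_x'), (B8_y',B8_x), (B8_y',B8_y), (B8_x',B8_x), (B8_x',B8_y)}"

definition K_B8 :: "(b8 \<times> b8) set" where "K_B8 = {(B8_z',B8_0), (B8_x,B8_0), (B8_x,B8_y'), (B8_x,B8_x'), (B8_y,B8_0), (B8_y,B8_x), (B8_y,B8_y'), (B8_y',B8_0), (B8_y',B8_x), (B8_y',B8_y), (B8_x',B8_0), (B8_x',B8_x), (B8_1,B8_0)}"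

lemma inc_B8: "\<not> leq B8 i j \<Longrightarrow> \<not> leq B8 j i \<Longrightarrow> (i,j) \<in> Inc_B8"
  by (cases i; cases j; simp add: leq_B8 le_B8_def Inc_B8_def)

lemma keys_B8: "\<not> leq B8 i j \<Longrightarrow> \<exists>pq\<in>K_B8. (leq B8 (fst pq) i \<and> leq B8 j (snd pq)) \<or> (leq B8 (neg B8 (snd pq)) i \<and> leq B8 j (neg B8 (fst pq)))"
  by (cases i; cases j; simp add: leq_B8 le_B8_def K_B8_def)

abbreviation "C_B8s \<equiv> {(S_0, S_x), (S_0, S_y), (S_x, S_z), (S_y, S_z'), (S_z, S_z'), (S_z, S_y'), (S_z', S_x'), (S_y', S_1), (S_x', S_1)}"

definition le_B8s :: "b8s \<Rightarrow> b8s \<Rightarrow> bool" where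
  "le_B8s i j \<longleftrightarrow> (i,j) \<in> {(S_0,S_0), (S_0,S_x), (S_0,S_y), (S_0,S_z), (S_0,S_z'), (S_0,S_y'), (S_0,S_x'), (S_0,S_1), (S_x,S_x), (S_x,S_z), (S_x,S_z'), (S_x,S_y'), (S_x,S_x'), (S_x,S_1), (S_y,S_y), (S_y,S_z'), (S_y,S_x'), (S_y,S_1), (S_z,S_z), (S_z,S_z'), (S_z,S_y'), (S_z,S_x'), (S_z,S_1), (S_z',S_z'), (S_z',S_x'), (S_z',S_1), (S_y',S_y'), (S_y',S_1), (S_x',S_x'), (S_x',S_1), (S_1,S_1)}"

lemma all_B8s: "(\<forall>w::b8s. P w) \<longleftrightarrow> P S_0 \<and> P S_x \<and> P S_y \<and> P S_z \<and> P S_z' \<and> P S_y' \<and> P S_x' \<and> P S_1"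
  by (metis b8s.exhaust)

lemma ex_B8s: "(\<exists>w::b8s. P w) \<longleftrightarrow> P S_0 \<or> P S_x \<or> P S_y \<or> P S_z \<or> P S_z' \<or> P S_y' \<or> P S_x' \<or> P S_1"
  by (metis b8s.exhaust)

lemma ch_B8s_0_1: "(S_0, S_x) \<in> C_B8s\<^sup>*"
  by (rule r_into_rtrancl, simp)

lemma ch_B8s_0_2: "(S_0, S_y) \<in> C_B8s\<^sup>*"
  by (rule r_into_rtrancl, simp)

lemma ch_B8s_0_3: "(S_0, S_z) \<in> C_B8s\<^sup>*"
  by (rule chain_step[of S_0 S_x], simp, rule r_into_rtrancl, simp)

lemma ch_B8s_0_4: "(S_0, S_z') \<in> C_B8s\<^sup>*"
  by (rule chain_step[of S_0 S_y], simp, rule r_into_rtrancl, simp)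

lemma ch_B8s_0_5: "(S_0, S_y') \<in> C_B8s\<^sup>*"
  by (rule chain_step[of S_0 S_x], simp, rule chain_step[of S_x S_z], simp, rule r_into_rtrancl, simp)

lemma ch_B8s_0_6: "(S_0, S_x') \<in> C_B8s\<^sup>*"
  by (rule chain_step[of S_0 S_y], simp, rule chain_step[of S_y S_z'], simp, rule r_into_rtrancl, simp)

lemma ch_B8s_0_7: "(S_0, S_1) \<in> C_B8s\<^sup>*"
  by (rule chain_step[of S_0 S_x], simp, rule chain_step[of S_x S_z], simp, rule chain_step[of S_z S_y'], simp, rule r_into_rtrancl, simp)

lemma ch_B8s_1_3: "(S_x, S_z) \<in> C_B8s\<^sup>*"
  by (rule r_into_rtrancl, simp)

lemma ch_B8s_1_4: "(S_x, S_z') \<in> C_B8s\<^sup>*"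
  by (rule chain_step[of S_x S_z], simp, rule r_into_rtrancl, simp)

lemma ch_B8s_1_5: "(S_x, S_y') \<in> C_B8s\<^sup>*"
  by (rule chain_step[of S_x S_z], simp, rule r_into_rtrancl, simp)

lemma ch_B8s_1_6: "(S_x, S_x') \<in> C_B8s\<^sup>*"
  by (rule chain_step[of S_x S_z], simp, rule chain_step[of S_z S_z'], simp, rule r_into_rtrancl, simp)

lemma ch_B8s_1_7: "(S_x, S_1) \<in> C_B8s\<^sup>*"
  by (rule chain_step[of S_x S_z], simp, rule chain_step[of S_z S_y'], simp, rule r_into_rtrancl, simp)

lemma ch_B8s_2_4: "(S_y, S_z') \<in> C_B8s\<^sup>*"
  by (rule r_into_rtrancl, simp)

lemma ch_B8s_2_6: "(S_y, S_x') \<in> C_B8s\<^sup>*"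
  by (rule chain_step[of S_y S_z'], simp, rule r_into_rtrancl, simp)

lemma ch_B8s_2_7: "(S_y, S_1) \<in> C_B8s\<^sup>*"
  by (rule chain_step[of S_y S_z'], simp, rule chain_step[of S_z' S_x'], simp, rule r_into_rtrancl, simp)

lemma ch_B8s_3_4: "(S_z, S_z') \<in> C_B8s\<^sup>*"
  by (rule r_into_rtrancl, simp)

lemma ch_B8s_3_5: "(S_z, S_y') \<in> C_B8s\<^sup>*"
  by (rule r_into_rtrancl, simp)

lemma ch_B8s_3_6: "(S_z, S_x') \<in> C_B8s\<^sup>*"
  by (rule chain_step[of S_z S_z'], simp, rule r_into_rtrancl, simp)

lemma ch_B8s_3_7: "(S_z, S_1) \<in> C_B8s\<^sup>*"
  by (rule chain_step[of S_z S_y'], simp, rule r_into_rtrancl, simp)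

lemma ch_B8s_4_6: "(S_z', S_x') \<in> C_B8s\<^sup>*"
  by (rule r_into_rtrancl, simp)

lemma ch_B8s_4_7: "(S_z', S_1) \<in> C_B8s\<^sup>*"
  by (rule chain_step[of S_z' S_x'], simp, rule r_into_rtrancl, simp)

lemma ch_B8s_5_7: "(S_y', S_1) \<in> C_B8s\<^sup>*"
  by (rule r_into_rtrancl, simp)

lemma ch_B8s_6_7: "(S_x', S_1) \<in> C_B8s\<^sup>*"
  by (rule r_into_rtrancl, simp)

lemma le_step_B8s: "(y,z) \<in> C_B8s \<Longrightarrow> le_B8s i y \<Longrightarrow> le_B8s i z"
  by (cases i; cases y; cases z; simp add: le_B8s_def)

lemma ord_B8s: "ord_of C_B8s i j \<longleftrightarrow> le_B8s i j"
proof
  assume "ord_of C_B8s i j"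
  then have "(i,j) \<in> C_B8s\<^sup>*" by (simp add: ord_of_def)
  then show "le_B8s i j"
  proof (induction rule: rtrancl_induct)
    case base then show ?case by (cases i) (simp_all add: le_B8s_def)
  next
    case (step y z) then show ?case using le_step_B8s by blast
  qed
next
  assume "le_B8s i j"
  then show "ord_of C_B8s i j" unfolding ord_of_def
    by (cases i; cases j; simp add: le_B8s_def ch_B8s_0_1 ch_B8s_0_2 ch_B8s_0_3 ch_B8s_0_4 ch_B8s_0_5 ch_B8s_0_6 ch_B8s_0_7 ch_B8s_1_3 ch_B8s_1_4 ch_B8s_1_5 ch_B8s_1_6 ch_B8s_1_7 ch_B8s_2_4 ch_B8s_2_6 ch_B8s_2_7 ch_B8s_3_4 ch_B8s_3_5 ch_B8s_3_6 ch_B8s_3_7 ch_B8s_4_6 ch_B8s_4_7 ch_B8s_5_7 ch_B8s_6_7)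
qed

lemma antisym_B8s: "le_B8s i j \<Longrightarrow> le_B8s j i \<Longrightarrow> i = j"
  by (cases i; cases j; simp add: le_B8s_def)

lemma glb_B8s:
  "glb_of C_B8s S_0 S_0 = S_0"
  "glb_of C_B8s S_0 S_x = S_0"
  "glb_of C_B8s S_0 S_y = S_0"
  "glb_of C_B8s S_0 S_z = S_0"
  "glb_of C_B8s S_0 S_z' = S_0"
  "glb_of C_B8s S_0 S_y' = S_0"
  "glb_of C_B8s S_0 S_x' = S_0"
  "glb_of C_B8s S_0 S_1 = S_0"
  "glb_of C_B8s S_x S_0 = S_0"
  "glb_of C_B8s S_x S_x = S_x"
  "glb_of C_B8s S_x S_y = S_0"
  "glb_of C_B8s S_x S_z = S_x"
  "glb_of C_B8s S_x S_z' = S_x"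
  "glb_of C_B8s S_x S_y' = S_x"
  "glb_of C_B8s S_x S_x' = S_x"
  "glb_of C_B8s S_x S_1 = S_x"
  "glb_of C_B8s S_y S_0 = S_0"
  "glb_of C_B8s S_y S_x = S_0"
  "glb_of C_B8s S_y S_y = S_y"
  "glb_of C_B8s S_y S_z = S_0"
  "glb_of C_B8s S_y S_z' = S_y"
  "glb_of C_B8s S_y S_y' = S_0"
  "glb_of C_B8s S_y S_x' = S_y"
  "glb_of C_B8s S_y S_1 = S_y"
  "glb_of C_B8s S_z S_0 = S_0"
  "glb_of C_B8s S_z S_x = S_x"
  "glb_of C_B8s S_z S_y = S_0"
  "glb_of C_B8s S_z S_z = S_z"
  "glb_of C_B8s S_z S_z' = S_z"
  "glb_of C_B8s S_z S_y' = S_z"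
  "glb_of C_B8s S_z S_x' = S_z"
  "glb_of C_B8s S_z S_1 = S_z"
  "glb_of C_B8s S_z' S_0 = S_0"
  "glb_of C_B8s S_z' S_x = S_x"
  "glb_of C_B8s S_z' S_y = S_y"
  "glb_of C_B8s S_z' S_z = S_z"
  "glb_of C_B8s S_z' S_z' = S_z'"
  "glb_of C_B8s S_z' S_y' = S_z"
  "glb_of C_B8s S_z' S_x' = S_z'"
  "glb_of C_B8s S_z' S_1 = S_z'"
  "glb_of C_B8s S_y' S_0 = S_0"
  "glb_of C_B8s S_y' S_x = S_x"
  "glb_of C_B8s S_y' S_y = S_0"
  "glb_of C_B8s S_y' S_z = S_z"
  "glb_of C_B8s S_y' S_z' = S_z"
  "glb_of C_B8s S_y' S_y' = S_y'"
  "glb_of C_B8s S_y' S_x' = S_z"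
  "glb_of C_B8s S_y' S_1 = S_y'"
  "glb_of C_B8s S_x' S_0 = S_0"
  "glb_of C_B8s S_x' S_x = S_x"
  "glb_of C_B8s S_x' S_y = S_y"
  "glb_of C_B8s S_x' S_z = S_z"
  "glb_of C_B8s S_x' S_z' = S_z'"
  "glb_of C_B8s S_x' S_y' = S_z"
  "glb_of C_B8s S_x' S_x' = S_x'"
  "glb_of C_B8s S_x' S_1 = S_x'"
  "glb_of C_B8s S_1 S_0 = S_0"
  "glb_of C_B8s S_1 S_x = S_x"
  "glb_of C_B8s S_1 S_y = S_y"
  "glb_of C_B8s S_1 S_z = S_z"
  "glb_of C_B8s S_1 S_z' = S_z'"
  "glb_of C_B8s S_1 S_y' = S_y'"
  "glb_of C_B8s S_1 S_x' = S_x'"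
  "glb_of C_B8s S_1 S_1 = S_1"
  by (rule glb_eqI[OF ord_B8s antisym_B8s]; simp add: le_B8s_def all_B8s)+

lemma lub_B8s:
  "lub_of C_B8s S_0 S_0 = S_0"
  "lub_of C_B8s S_0 S_x = S_x"
  "lub_of C_B8s S_0 S_y = S_y"
  "lub_of C_B8s S_0 S_z = S_z"
  "lub_of C_B8s S_0 S_z' = S_z'"
  "lub_of C_B8s S_0 S_y' = S_y'"
  "lub_of C_B8s S_0 S_x' = S_x'"
  "lub_of C_B8s S_0 S_1 = S_1"
  "lub_of C_B8s S_x S_0 = S_x"
  "lub_of C_B8s S_x S_x = S_x"
  "lub_of C_B8s S_x S_y = S_z'"
  "lub_of C_B8s S_x S_z = S_z"
  "lub_of C_B8s S_x S_z' = S_z'"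
  "lub_of C_B8s S_x S_y' = S_y'"
  "lub_of C_B8s S_x S_x' = S_x'"
  "lub_of C_B8s S_x S_1 = S_1"
  "lub_of C_B8s S_y S_0 = S_y"
  "lub_of C_B8s S_y S_x = S_z'"
  "lub_of C_B8s S_y S_y = S_y"
  "lub_of C_B8s S_y S_z = S_z'"
  "lub_of C_B8s S_y S_z' = S_z'"
  "lub_of C_B8s S_y S_y' = S_1"
  "lub_of C_B8s S_y S_x' = S_x'"
  "lub_of C_B8s S_y S_1 = S_1"
  "lub_of C_B8s S_z S_0 = S_z"
  "lub_of C_B8s S_z S_x = S_z"
  "lub_of C_B8s S_z S_y = S_z'"
  "lub_of C_B8s S_z S_z = S_z"
  "lub_of C_B8s S_z S_z' = S_z'"
  "lub_of C_B8s S_z S_y' = S_y'"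
  "lub_of C_B8s S_z S_x' = S_x'"
  "lub_of C_B8s S_z S_1 = S_1"
  "lub_of C_B8s S_z' S_0 = S_z'"
  "lub_of C_B8s S_z' S_x = S_z'"
  "lub_of C_B8s S_z' S_y = S_z'"
  "lub_of C_B8s S_z' S_z = S_z'"
  "lub_of C_B8s S_z' S_z' = S_z'"
  "lub_of C_B8s S_z' S_y' = S_1"
  "lub_of C_B8s S_z' S_x' = S_x'"
  "lub_of C_B8s S_z' S_1 = S_1"
  "lub_of C_B8s S_y' S_0 = S_y'"
  "lub_of C_B8s S_y' S_x = S_y'"
  "lub_of C_B8s S_y' S_y = S_1"
  "lub_of C_B8s S_y' S_z = S_y'"
  "lub_of C_B8s S_y' S_z' = S_1"
  "lub_of C_B8s S_y' S_y' = S_y'"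
  "lub_of C_B8s S_y' S_x' = S_1"
  "lub_of C_B8s S_y' S_1 = S_1"
  "lub_of C_B8s S_x' S_0 = S_x'"
  "lub_of C_B8s S_x' S_x = S_x'"
  "lub_of C_B8s S_x' S_y = S_x'"
  "lub_of C_B8s S_x' S_z = S_x'"
  "lub_of C_B8s S_x' S_z' = S_x'"
  "lub_of C_B8s S_x' S_y' = S_1"
  "lub_of C_B8s S_x' S_x' = S_x'"
  "lub_of C_B8s S_x' S_1 = S_1"
  "lub_of C_B8s S_1 S_0 = S_1"
  "lub_of C_B8s S_1 S_x = S_1"
  "lub_of C_B8s S_1 S_y = S_1"
  "lub_of C_B8s S_1 S_z = S_1"
  "lub_of C_B8s S_1 S_z' = S_1"
  "lub_of C_B8s S_1 S_y' = S_1"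
  "lub_of C_B8s S_1 S_x' = S_1"
  "lub_of C_B8s S_1 S_1 = S_1"
  by (rule lub_eqI[OF ord_B8s antisym_B8s]; simp add: le_B8s_def all_B8s)+

lemma B8s_simps[simp]: "carrier B8s = UNIV" "meet B8s = glb_of C_B8s" "join B8s = lub_of C_B8s" "neg B8s = neg8s" "bot B8s = S_0" "top B8s = S_1"
  by (simp_all add: B8s_def alg_of_def)

lemma leq_B8s: "leq B8s i j \<longleftrightarrow> le_B8s i j"
  by (cases i; cases j; simp add: leq_def glb_B8s le_B8s_def)

lemma ord2_B8s: "leq B8s i j \<longleftrightarrow> (i,j) \<in> C_B8s\<^sup>*"
  using ord_B8s[of i j] by (simp add: leq_B8s ord_of_def)

lemma Tcomm_B8s: "glb_of C_B8s i j = glb_of C_B8s j i" by (cases i; cases j; simp add: glb_B8s)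
lemma Tlow_B8s: "le_B8s (glb_of C_B8s i j) i" by (cases i; cases j; simp add: glb_B8s le_B8s_def)
lemma Tinv_B8s: "neg8s (neg8s i) = i" by (cases i) simp_all
lemma Tdm_B8s: "lub_of C_B8s i j = neg8s (glb_of C_B8s (neg8s i) (neg8s j))" by (cases i; cases j; simp add: glb_B8s lub_B8s)
lemma Tnanti_B8s: "le_B8s i j \<Longrightarrow> le_B8s (neg8s j) (neg8s i)" by (cases i; cases j; simp add: le_B8s_def)
lemma good_B8s: "goodT B8s"
  unfolding goodT_def by (auto simp: leq_B8s Tcomm_B8s Tlow_B8s Tinv_B8s Tdm_B8s Tnanti_B8s intro: antisym_B8s)

definition Inc_B8s :: "(b8s \<times> b8s) set" where "Inc_B8s = {(S_x,S_y), (S_y,S_x), (S_y,S_z), (S_y,S_y'), (S_z,S_y), (S_z',S_y'), (S_y',S_y), (S_y',S_z'), (S_y',S_x'), (S_x',S_y')}"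

definition K_B8s :: "(b8s \<times> b8s) set" where "K_B8s = {(S_x,S_y), (S_y,S_x), (S_y,S_y'), (S_z,S_x), (S_z,S_y), (S_y',S_x), (S_y',S_y), (S_x',S_x)}"

lemma inc_B8s: "\<not> leq B8s i j \<Longrightarrow> \<not> leq B8s j i \<Longrightarrow> (i,j) \<in> Inc_B8s"
  by (cases i; cases j; simp add: leq_B8s le_B8s_def Inc_B8s_def)

lemma keys_B8s: "\<not> leq B8s i j \<Longrightarrow> \<exists>pq\<in>K_B8s. (leq B8s (fst pq) i \<and> leq B8s j (snd pq)) \<or> (leq B8s (neg B8s (snd pq)) i \<and> leq B8s j (neg B8s (fst pq)))"
  by (cases i; cases j; simp add: leq_B8s le_B8s_def K_B8s_def)

abbreviation "C_B10 \<equiv> {(T_0, T_y'), (T_0, T_m), (T_0, T_x), (T_y', T_a'), (T_m, T_a'), (T_m, T_a), (T_x, T_a), (T_a', T_x'), (T_a', T_m'), (T_a, T_m'), (T_a, T_y), (T_x', T_1), (T_m', T_1), (T_y, T_1)}"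

definition le_B10 :: "b10 \<Rightarrow> b10 \<Rightarrow> bool" where
  "le_B10 i j \<longleftrightarrow> (i,j) \<in> {(T_0,T_0), (T_0,T_x), (T_0,T_y'), (T_0,T_m), (T_0,T_a), (T_0,T_a'), (T_0,T_x'), (T_0,T_y), (T_0,T_m'), (T_0,T_1), (T_x,T_x), (T_x,T_a), (T_x,T_y), (T_x,T_m'), (T_x,T_1), (T_y',T_y'), (T_y',T_a'), (T_y',T_x'), (T_y',T_m'), (T_y',T_1), (T_m,T_m), (T_m,T_a), (T_m,T_a'), (T_m,T_x'), (T_m,T_y), (T_m,T_m'), (T_m,T_1), (T_a,T_a), (T_a,T_y), (T_a,T_m'), (T_a,T_1), (T_a',T_a'), (T_a',T_x'), (T_a',T_m'), (T_a',T_1), (T_x',T_x'), (T_x',T_1), (T_y,T_y), (T_y,T_1), (T_m',T_m'), (T_m',T_1), (T_1,T_1)}"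

lemma all_B10: "(\<forall>w::b10. P w) \<longleftrightarrow> P T_0 \<and> P T_x \<and> P T_y' \<and> P T_m \<and> P T_a \<and> P T_a' \<and> P T_x' \<and> P T_y \<and> P T_m' \<and> P T_1"
  by (metis b10.exhaust)

lemma ex_B10: "(\<exists>w::b10. P w) \<longleftrightarrow> P T_0 \<or> P T_x \<or> P T_y' \<or> P T_m \<or> P T_a \<or> P T_a' \<or> P T_x' \<or> P T_y \<or> P T_m' \<or> P T_1"
  by (metis b10.exhaust)

lemma ch_B10_0_1: "(T_0, T_x) \<in> C_B10\<^sup>*"
  by (rule r_into_rtrancl, simp)

lemma ch_B10_0_2: "(T_0, T_y') \<in> C_B10\<^sup>*"
  by (rule r_into_rtrancl, simp)

lemma ch_B10_0_3: "(T_0, T_m) \<in> C_B10\<^sup>*"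
  by (rule r_into_rtrancl, simp)

lemma ch_B10_0_4: "(T_0, T_a) \<in> C_B10\<^sup>*"
  by (rule chain_step[of T_0 T_m], simp, rule r_into_rtrancl, simp)

lemma ch_B10_0_5: "(T_0, T_a') \<in> C_B10\<^sup>*"
  by (rule chain_step[of T_0 T_y'], simp, rule r_into_rtrancl, simp)

lemma ch_B10_0_6: "(T_0, T_x') \<in> C_B10\<^sup>*"
  by (rule chain_step[of T_0 T_y'], simp, rule chain_step[of T_y' T_a'], simp, rule r_into_rtrancl, simp)

lemma ch_B10_0_7: "(T_0, T_y) \<in> C_B10\<^sup>*"
  by (rule chain_step[of T_0 T_m], simp, rule chain_step[of T_m T_a], simp, rule r_into_rtrancl, simp)

lemma ch_B10_0_8: "(T_0, T_m') \<in> C_B10\<^sup>*"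
  by (rule chain_step[of T_0 T_y'], simp, rule chain_step[of T_y' T_a'], simp, rule r_into_rtrancl, simp)

lemma ch_B10_0_9: "(T_0, T_1) \<in> C_B10\<^sup>*"
  by (rule chain_step[of T_0 T_y'], simp, rule chain_step[of T_y' T_a'], simp, rule chain_step[of T_a' T_x'], simp, rule r_into_rtrancl, simp)

lemma ch_B10_1_4: "(T_x, T_a) \<in> C_B10\<^sup>*"
  by (rule r_into_rtrancl, simp)

lemma ch_B10_1_7: "(T_x, T_y) \<in> C_B10\<^sup>*"
  by (rule chain_step[of T_x T_a], simp, rule r_into_rtrancl, simp)

lemma ch_B10_1_8: "(T_x, T_m') \<in> C_B10\<^sup>*"
  by (rule chain_step[of T_x T_a], simp, rule r_into_rtrancl, simp)

lemma ch_B10_1_9: "(T_x, T_1) \<in> C_B10\<^sup>*"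
  by (rule chain_step[of T_x T_a], simp, rule chain_step[of T_a T_m'], simp, rule r_into_rtrancl, simp)

lemma ch_B10_2_5: "(T_y', T_a') \<in> C_B10\<^sup>*"
  by (rule r_into_rtrancl, simp)

lemma ch_B10_2_6: "(T_y', T_x') \<in> C_B10\<^sup>*"
  by (rule chain_step[of T_y' T_a'], simp, rule r_into_rtrancl, simp)

lemma ch_B10_2_8: "(T_y', T_m') \<in> C_B10\<^sup>*"
  by (rule chain_step[of T_y' T_a'], simp, rule r_into_rtrancl, simp)

lemma ch_B10_2_9: "(T_y', T_1) \<in> C_B10\<^sup>*"
  by (rule chain_step[of T_y' T_a'], simp, rule chain_step[of T_a' T_x'], simp, rule r_into_rtrancl, simp)

lemma ch_B10_3_4: "(T_m, T_a) \<in> C_B10\<^sup>*"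
  by (rule r_into_rtrancl, simp)

lemma ch_B10_3_5: "(T_m, T_a') \<in> C_B10\<^sup>*"
  by (rule r_into_rtrancl, simp)

lemma ch_B10_3_6: "(T_m, T_x') \<in> C_B10\<^sup>*"
  by (rule chain_step[of T_m T_a'], simp, rule r_into_rtrancl, simp)

lemma ch_B10_3_7: "(T_m, T_y) \<in> C_B10\<^sup>*"
  by (rule chain_step[of T_m T_a], simp, rule r_into_rtrancl, simp)

lemma ch_B10_3_8: "(T_m, T_m') \<in> C_B10\<^sup>*"
  by (rule chain_step[of T_m T_a'], simp, rule r_into_rtrancl, simp)

lemma ch_B10_3_9: "(T_m, T_1) \<in> C_B10\<^sup>*"
  by (rule chain_step[of T_m T_a'], simp, rule chain_step[of T_a' T_x'], simp, rule r_into_rtrancl, simp)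

lemma ch_B10_4_7: "(T_a, T_y) \<in> C_B10\<^sup>*"
  by (rule r_into_rtrancl, simp)

lemma ch_B10_4_8: "(T_a, T_m') \<in> C_B10\<^sup>*"
  by (rule r_into_rtrancl, simp)

lemma ch_B10_4_9: "(T_a, T_1) \<in> C_B10\<^sup>*"
  by (rule chain_step[of T_a T_m'], simp, rule r_into_rtrancl, simp)

lemma ch_B10_5_6: "(T_a', T_x') \<in> C_B10\<^sup>*"
  by (rule r_into_rtrancl, simp)

lemma ch_B10_5_8: "(T_a', T_m') \<in> C_B10\<^sup>*"
  by (rule r_into_rtrancl, simp)

lemma ch_B10_5_9: "(T_a', T_1) \<in> C_B10\<^sup>*"
  by (rule chain_step[of T_a' T_x'], simp, rule r_into_rtrancl, simp)

lemma ch_B10_6_9: "(T_x', T_1) \<in> C_B10\<^sup>*"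
  by (rule r_into_rtrancl, simp)

lemma ch_B10_7_9: "(T_y, T_1) \<in> C_B10\<^sup>*"
  by (rule r_into_rtrancl, simp)

lemma ch_B10_8_9: "(T_m', T_1) \<in> C_B10\<^sup>*"
  by (rule r_into_rtrancl, simp)

lemma le_step_B10: "(y,z) \<in> C_B10 \<Longrightarrow> le_B10 i y \<Longrightarrow> le_B10 i z"
  by (cases i; cases y; cases z; simp add: le_B10_def)

lemma ord_B10: "ord_of C_B10 i j \<longleftrightarrow> le_B10 i j"
proof
  assume "ord_of C_B10 i j"
  then have "(i,j) \<in> C_B10\<^sup>*" by (simp add: ord_of_def)
  then show "le_B10 i j"
  proof (induction rule: rtrancl_induct)
    case base then show ?case by (cases i) (simp_all add: le_B10_def)
  next
    case (step y z) then show ?case using le_step_B10 by blast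
  qed
next
  assume "le_B10 i j"
  then show "ord_of C_B10 i j" unfolding ord_of_def
    by (cases i; cases j; simp add: le_B10_def ch_B10_0_1 ch_B10_0_2 ch_B10_0_3 ch_B10_0_4 ch_B10_0_5 ch_B10_0_6 ch_B10_0_7 ch_B10_0_8 ch_B10_0_9 ch_B10_1_4 ch_B10_1_7 ch_B10_1_8 ch_B10_1_9 ch_B10_2_5 ch_B10_2_6 ch_B10_2_8 ch_B10_2_9 ch_B10_3_4 ch_B10_3_5 ch_B10_3_6 ch_B10_3_7 ch_B10_3_8 ch_B10_3_9 ch_B10_4_7 ch_B10_4_8 ch_B10_4_9 ch_B10_5_6 ch_B10_5_8 ch_B10_5_9 ch_B10_6_9 ch_B10_7_9 ch_B10_8_9)
qed

lemma antisym_B10: "le_B10 i j \<Longrightarrow> le_B10 j i \<Longrightarrow> i = j"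
  by (cases i; cases j; simp add: le_B10_def)

lemma glb_B10:
  "glb_of C_B10 T_0 T_0 = T_0"
  "glb_of C_B10 T_0 T_x = T_0"
  "glb_of C_B10 T_0 T_y' = T_0"
  "glb_of C_B10 T_0 T_m = T_0"
  "glb_of C_B10 T_0 T_a = T_0"
  "glb_of C_B10 T_0 T_a' = T_0"
  "glb_of C_B10 T_0 T_x' = T_0"
  "glb_of C_B10 T_0 T_y = T_0"
  "glb_of C_B10 T_0 T_m' = T_0"
  "glb_of C_B10 T_0 T_1 = T_0"
  "glb_of C_B10 T_x T_0 = T_0"
  "glb_of C_B10 T_x T_x = T_x"
  "glb_of C_B10 T_x T_y' = T_0"
  "glb_of C_B10 T_x T_m = T_0"
  "glb_of C_B10 T_x T_a = T_x"
  "glb_of C_B10 T_x T_a' = T_0"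
  "glb_of C_B10 T_x T_x' = T_0"
  "glb_of C_B10 T_x T_y = T_x"
  "glb_of C_B10 T_x T_m' = T_x"
  "glb_of C_B10 T_x T_1 = T_x"
  "glb_of C_B10 T_y' T_0 = T_0"
  "glb_of C_B10 T_y' T_x = T_0"
  "glb_of C_B10 T_y' T_y' = T_y'"
  "glb_of C_B10 T_y' T_m = T_0"
  "glb_of C_B10 T_y' T_a = T_0"
  "glb_of C_B10 T_y' T_a' = T_y'"
  "glb_of C_B10 T_y' T_x' = T_y'"
  "glb_of C_B10 T_y' T_y = T_0"
  "glb_of C_B10 T_y' T_m' = T_y'"
  "glb_of C_B10 T_y' T_1 = T_y'"
  "glb_of C_B10 T_m T_0 = T_0"
  "glb_of C_B10 T_m T_x = T_0"
  "glb_of C_B10 T_m T_y' = T_0"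
  "glb_of C_B10 T_m T_m = T_m"
  "glb_of C_B10 T_m T_a = T_m"
  "glb_of C_B10 T_m T_a' = T_m"
  "glb_of C_B10 T_m T_x' = T_m"
  "glb_of C_B10 T_m T_y = T_m"
  "glb_of C_B10 T_m T_m' = T_m"
  "glb_of C_B10 T_m T_1 = T_m"
  "glb_of C_B10 T_a T_0 = T_0"
  "glb_of C_B10 T_a T_x = T_x"
  "glb_of C_B10 T_a T_y' = T_0"
  "glb_of C_B10 T_a T_m = T_m"
  "glb_of C_B10 T_a T_a = T_a"
  "glb_of C_B10 T_a T_a' = T_m"
  "glb_of C_B10 T_a T_x' = T_m"
  "glb_of C_B10 T_a T_y = T_a"
  "glb_of C_B10 T_a T_m' = T_a"
  "glb_of C_B10 T_a T_1 = T_a"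
  "glb_of C_B10 T_a' T_0 = T_0"
  "glb_of C_B10 T_a' T_x = T_0"
  "glb_of C_B10 T_a' T_y' = T_y'"
  "glb_of C_B10 T_a' T_m = T_m"
  "glb_of C_B10 T_a' T_a = T_m"
  "glb_of C_B10 T_a' T_a' = T_a'"
  "glb_of C_B10 T_a' T_x' = T_a'"
  "glb_of C_B10 T_a' T_y = T_m"
  "glb_of C_B10 T_a' T_m' = T_a'"
  "glb_of C_B10 T_a' T_1 = T_a'"
  "glb_of C_B10 T_x' T_0 = T_0"
  "glb_of C_B10 T_x' T_x = T_0"
  "glb_of C_B10 T_x' T_y' = T_y'"
  "glb_of C_B10 T_x' T_m = T_m"
  "glb_of C_B10 T_x' T_a = T_m"
  "glb_of C_B10 T_x' T_a' = T_a'"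
  "glb_of C_B10 T_x' T_x' = T_x'"
  "glb_of C_B10 T_x' T_y = T_m"
  "glb_of C_B10 T_x' T_m' = T_a'"
  "glb_of C_B10 T_x' T_1 = T_x'"
  "glb_of C_B10 T_y T_0 = T_0"
  "glb_of C_B10 T_y T_x = T_x"
  "glb_of C_B10 T_y T_y' = T_0"
  "glb_of C_B10 T_y T_m = T_m"
  "glb_of C_B10 T_y T_a = T_a"
  "glb_of C_B10 T_y T_a' = T_m"
  "glb_of C_B10 T_y T_x' = T_m"
  "glb_of C_B10 T_y T_y = T_y"
  "glb_of C_B10 T_y T_m' = T_a"
  "glb_of C_B10 T_y T_1 = T_y"
  "glb_of C_B10 T_m' T_0 = T_0"
  "glb_of C_B10 T_m' T_x = T_x"
  "glb_of C_B10 T_m' T_y' = T_y'"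
  "glb_of C_B10 T_m' T_m = T_m"
  "glb_of C_B10 T_m' T_a = T_a"
  "glb_of C_B10 T_m' T_a' = T_a'"
  "glb_of C_B10 T_m' T_x' = T_a'"
  "glb_of C_B10 T_m' T_y = T_a"
  "glb_of C_B10 T_m' T_m' = T_m'"
  "glb_of C_B10 T_m' T_1 = T_m'"
  "glb_of C_B10 T_1 T_0 = T_0"
  "glb_of C_B10 T_1 T_x = T_x"
  "glb_of C_B10 T_1 T_y' = T_y'"
  "glb_of C_B10 T_1 T_m = T_m"
  "glb_of C_B10 T_1 T_a = T_a"
  "glb_of C_B10 T_1 T_a' = T_a'"
  "glb_of C_B10 T_1 T_x' = T_x'"
  "glb_of C_B10 T_1 T_y = T_y"
  "glb_of C_B10 T_1 T_m' = T_m'"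
  "glb_of C_B10 T_1 T_1 = T_1"
  by (rule glb_eqI[OF ord_B10 antisym_B10]; simp add: le_B10_def all_B10)+

lemma lub_B10:
  "lub_of C_B10 T_0 T_0 = T_0"
  "lub_of C_B10 T_0 T_x = T_x"
  "lub_of C_B10 T_0 T_y' = T_y'"
  "lub_of C_B10 T_0 T_m = T_m"
  "lub_of C_B10 T_0 T_a = T_a"
  "lub_of C_B10 T_0 T_a' = T_a'"
  "lub_of C_B10 T_0 T_x' = T_x'"
  "lub_of C_B10 T_0 T_y = T_y"
  "lub_of C_B10 T_0 T_m' = T_m'"
  "lub_of C_B10 T_0 T_1 = T_1"
  "lub_of C_B10 T_x T_0 = T_x"
  "lub_of C_B10 T_x T_x = T_x"
  "lub_of C_B10 T_x T_y' = T_m'"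
  "lub_of C_B10 T_x T_m = T_a"
  "lub_of C_B10 T_x T_a = T_a"
  "lub_of C_B10 T_x T_a' = T_m'"
  "lub_of C_B10 T_x T_x' = T_1"
  "lub_of C_B10 T_x T_y = T_y"
  "lub_of C_B10 T_x T_m' = T_m'"
  "lub_of C_B10 T_x T_1 = T_1"
  "lub_of C_B10 T_y' T_0 = T_y'"
  "lub_of C_B10 T_y' T_x = T_m'"
  "lub_of C_B10 T_y' T_y' = T_y'"
  "lub_of C_B10 T_y' T_m = T_a'"
  "lub_of C_B10 T_y' T_a = T_m'"
  "lub_of C_B10 T_y' T_a' = T_a'"
  "lub_of C_B10 T_y' T_x' = T_x'"
  "lub_of C_B10 T_y' T_y = T_1"
  "lub_of C_B10 T_y' T_m' = T_m'"
  "lub_of C_B10 T_y' T_1 = T_1"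
  "lub_of C_B10 T_m T_0 = T_m"
  "lub_of C_B10 T_m T_x = T_a"
  "lub_of C_B10 T_m T_y' = T_a'"
  "lub_of C_B10 T_m T_m = T_m"
  "lub_of C_B10 T_m T_a = T_a"
  "lub_of C_B10 T_m T_a' = T_a'"
  "lub_of C_B10 T_m T_x' = T_x'"
  "lub_of C_B10 T_m T_y = T_y"
  "lub_of C_B10 T_m T_m' = T_m'"
  "lub_of C_B10 T_m T_1 = T_1"
  "lub_of C_B10 T_a T_0 = T_a"
  "lub_of C_B10 T_a T_x = T_a"
  "lub_of C_B10 T_a T_y' = T_m'"
  "lub_of C_B10 T_a T_m = T_a"
  "lub_of C_B10 T_a T_a = T_a"
  "lub_of C_B10 T_a T_a' = T_m'"
  "lub_of C_B10 T_a T_x' = T_1"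
  "lub_of C_B10 T_a T_y = T_y"
  "lub_of C_B10 T_a T_m' = T_m'"
  "lub_of C_B10 T_a T_1 = T_1"
  "lub_of C_B10 T_a' T_0 = T_a'"
  "lub_of C_B10 T_a' T_x = T_m'"
  "lub_of C_B10 T_a' T_y' = T_a'"
  "lub_of C_B10 T_a' T_m = T_a'"
  "lub_of C_B10 T_a' T_a = T_m'"
  "lub_of C_B10 T_a' T_a' = T_a'"
  "lub_of C_B10 T_a' T_x' = T_x'"
  "lub_of C_B10 T_a' T_y = T_1"
  "lub_of C_B10 T_a' T_m' = T_m'"
  "lub_of C_B10 T_a' T_1 = T_1"
  "lub_of C_B10 T_x' T_0 = T_x'"
  "lub_of C_B10 T_x' T_x = T_1"
  "lub_of C_B10 T_x' T_y' = T_x'"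
  "lub_of C_B10 T_x' T_m = T_x'"
  "lub_of C_B10 T_x' T_a = T_1"
  "lub_of C_B10 T_x' T_a' = T_x'"
  "lub_of C_B10 T_x' T_x' = T_x'"
  "lub_of C_B10 T_x' T_y = T_1"
  "lub_of C_B10 T_x' T_m' = T_1"
  "lub_of C_B10 T_x' T_1 = T_1"
  "lub_of C_B10 T_y T_0 = T_y"
  "lub_of C_B10 T_y T_x = T_y"
  "lub_of C_B10 T_y T_y' = T_1"
  "lub_of C_B10 T_y T_m = T_y"
  "lub_of C_B10 T_y T_a = T_y"
  "lub_of C_B10 T_y T_a' = T_1"
  "lub_of C_B10 T_y T_x' = T_1"
  "lub_of C_B10 T_y T_y = T_y"
  "lub_of C_B10 T_y T_m' = T_1"
  "lub_of C_B10 T_y T_1 = T_1"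
  "lub_of C_B10 T_m' T_0 = T_m'"
  "lub_of C_B10 T_m' T_x = T_m'"
  "lub_of C_B10 T_m' T_y' = T_m'"
  "lub_of C_B10 T_m' T_m = T_m'"
  "lub_of C_B10 T_m' T_a = T_m'"
  "lub_of C_B10 T_m' T_a' = T_m'"
  "lub_of C_B10 T_m' T_x' = T_1"
  "lub_of C_B10 T_m' T_y = T_1"
  "lub_of C_B10 T_m' T_m' = T_m'"
  "lub_of C_B10 T_m' T_1 = T_1"
  "lub_of C_B10 T_1 T_0 = T_1"
  "lub_of C_B10 T_1 T_x = T_1"
  "lub_of C_B10 T_1 T_y' = T_1"
  "lub_of C_B10 T_1 T_m = T_1"
  "lub_of C_B10 T_1 T_a = T_1"
  "lub_of C_B10 T_1 T_a' = T_1"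
  "lub_of C_B10 T_1 T_x' = T_1"
  "lub_of C_B10 T_1 T_y = T_1"
  "lub_of C_B10 T_1 T_m' = T_1"
  "lub_of C_B10 T_1 T_1 = T_1"
  by (rule lub_eqI[OF ord_B10 antisym_B10]; simp add: le_B10_def all_B10)+

lemma B10_simps[simp]: "carrier B10 = UNIV" "meet B10 = glb_of C_B10" "join B10 = lub_of C_B10" "neg B10 = neg10" "bot B10 = T_0" "top B10 = T_1"
  by (simp_all add: B10_def alg_of_def)

lemma leq_B10: "leq B10 i j \<longleftrightarrow> le_B10 i j"
  by (cases i; cases j; simp add: leq_def glb_B10 le_B10_def)

lemma ord2_B10: "leq B10 i j \<longleftrightarrow> (i,j) \<in> C_B10\<^sup>*"
  using ord_B10[of i j] by (simp add: leq_B10 ord_of_def)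

lemma Tcomm_B10: "glb_of C_B10 i j = glb_of C_B10 j i" by (cases i; cases j; simp add: glb_B10)
lemma Tlow_B10: "le_B10 (glb_of C_B10 i j) i" by (cases i; cases j; simp add: glb_B10 le_B10_def)
lemma Tinv_B10: "neg10 (neg10 i) = i" by (cases i) simp_all
lemma Tdm_B10: "lub_of C_B10 i j = neg10 (glb_of C_B10 (neg10 i) (neg10 j))" by (cases i; cases j; simp add: glb_B10 lub_B10)
lemma Tnanti_B10: "le_B10 i j \<Longrightarrow> le_B10 (neg10 j) (neg10 i)" by (cases i; cases j; simp add: le_B10_def)
lemma good_B10: "goodT B10"
  unfolding goodT_def by (auto simp: leq_B10 Tcomm_B10 Tlow_B10 Tinv_B10 Tdm_B10 Tnanti_B10 intro: antisym_B10)

definition Inc_B10 :: "(b10 \<times> b10) set" where "Inc_B10 = {(T_x,T_y'), (T_x,T_m), (T_x,T_a'), (T_x,T_x'), (T_y',T_x), (T_y',T_m), (T_y',T_a), (T_y',T_y), (T_m,T_x), (T_m,T_y'), (T_a,T_y'), (T_a,T_a'), (T_a,T_x'), (T_a',T_x), (T_a',T_a), (T_a',T_y), (T_x',T_x), (T_x',T_a), (T_x',T_y), (T_x',T_m'), (T_y,T_y'), (T_y,T_a'), (T_y,T_x'), (T_y,T_m'), (T_m',T_x'), (T_m',T_y)}"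

definition K_B10 :: "(b10 \<times> b10) set" where "K_B10 = {(T_x,T_y'), (T_x,T_x'), (T_y',T_x), (T_y',T_y), (T_m,T_x), (T_m,T_y'), (T_x',T_x), (T_x',T_y'), (T_y,T_y')}"

lemma inc_B10: "\<not> leq B10 i j \<Longrightarrow> \<not> leq B10 j i \<Longrightarrow> (i,j) \<in> Inc_B10"
  by (cases i; cases j; simp add: leq_B10 le_B10_def Inc_B10_def)

lemma keys_B10: "\<not> leq B10 i j \<Longrightarrow> \<exists>pq\<in>K_B10. (leq B10 (fst pq) i \<and> leq B10 j (snd pq)) \<or> (leq B10 (neg B10 (snd pq)) i \<and> leq B10 j (neg B10 (fst pq)))"
  by (cases i; cases j; simp add: leq_B10 le_B10_def K_B10_def)



context pk begin

lemma tr1: "L p q \<Longrightarrow> L u p \<Longrightarrow> u \<in> CA \<Longrightarrow> p \<in> CA \<Longrightarrow> q \<in> CA \<Longrightarrow> L u q"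
  using L_trans by blast
lemma tr2: "L p q \<Longrightarrow> L q v \<Longrightarrow> v \<in> CA \<Longrightarrow> p \<in> CA \<Longrightarrow> q \<in> CA \<Longrightarrow> L p v"
  using L_trans by blast
lemma kl1: "x \<in> CA \<Longrightarrow> y \<in> CA \<Longrightarrow> L (M x (N x)) (J y (N y))" by (rule kleene)
lemma kl2: "x \<in> CA \<Longrightarrow> y \<in> CA \<Longrightarrow> L (M x (N x)) (J (N y) y)" using kleene J_comm by simp
lemma kl3: "x \<in> CA \<Longrightarrow> y \<in> CA \<Longrightarrow> L (M (N x) x) (J y (N y))" using kleene M_comm by simp
lemma kl4: "x \<in> CA \<Longrightarrow> y \<in> CA \<Longrightarrow> L (M (N x) x) (J (N y) y)" using kleene M_comm J_comm by simp

lemma sp1_facts: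
  assumes xC: "x \<in> CA" and yC: "y \<in> CA" and xy: "L x y"
  and kdef: "k = J (M x (N x)) (M y (N y))"
  and t: "L (M (N x) y) k"
  shows "L k (J x (M y (N y)))" "L (J x (M y (N y))) (M y (J x (N x)))"
   "L (M y (J x (N x))) (N k)" "L k (N (M y (J x (N x))))"
   "L (M (J x (M y (N y))) (N (M y (J x (N x))))) k"
   "L (M (J x (M y (N y))) (N (J x (M y (N y))))) k"
   "L (M (M y (J x (N x))) (N (M y (J x (N x))))) k"
   "L (M (M y (J x (N x))) (N (J x (M y (N y))))) k"
proof -
  have kC: "k \<in> CA" using xC yC kdef by simp
  have ka: "L (M x (N x)) k" "L (M y (N y)) k" using xC yC kdef by (simp_all add: J_L1 J_L2)
  have kle: "L k v" if "v \<in> CA" "L (M x (N x)) v" "L (M y (N y)) v" for v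
    using that xC yC kdef by simp
  have yx: "L (N y) (N x)" using xy xC yC by simp
  note facts = xC yC kC xy yx ka t
  have Nk: "N k = M (J (N x) x) (J (N y) y)" using xC yC kdef by simp
  have knk: "L k (N k)" unfolding Nk using facts by (intro kle) (simp_all add: kl1 kl2 kl3 kl4)
  show "L k (J x (M y (N y)))" using facts by (intro kle) (simp_all add: ML1 ML2 LJ1 LJ2)+
  show "L (J x (M y (N y))) (M y (J x (N x)))" using facts kl2 by (simp_all add: ML1 ML2 LJ1 LJ2)
  show "L (M y (J x (N x))) (N k)" unfolding Nk using facts kl2 kl4 by (simp_all add: ML1 ML2 LJ1 LJ2)
  show "L k (N (M y (J x (N x))))" using facts kl2 kl4 by (intro kle) (simp_all add: ML1 ML2 LJ1 LJ2)+
  show "L (M (J x (M y (N y))) (N (M y (J x (N x))))) k" using facts kl2 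
    by (intro tr1[OF t]) (simp_all add: ML1 ML2 LJ1 LJ2)+
  show "L (M (J x (M y (N y))) (N (J x (M y (N y))))) k" using facts kl2 
    by (intro tr1[OF t]) (simp_all add: ML1 ML2 LJ1 LJ2)+
  show "L (M (M y (J x (N x))) (N (M y (J x (N x))))) k" using facts kl2 
    by (intro tr1[OF t]) (simp_all add: ML1 ML2 LJ1 LJ2)+
  show "L (M (M y (J x (N x))) (N (J x (M y (N y))))) k" using facts kl2 
    by (intro tr1[OF t]) (simp_all add: ML1 ML2 LJ1 LJ2)+
qed


lemma sp1_case:
  assumes xC: "x \<in> CA" and yC: "y \<in> CA" and xy: "L x y"
  and hyp: "M (N x) y = J (M x (N x)) (M y (N y))"
  and fail: "M y (J x (N x)) \<noteq> J x (M y (N y))"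
  shows "(\<exists>B. subalgebra B A \<and> isomorphic (restrict_alg A B) B6) \<or>
         (\<exists>B. subalgebra B A \<and> isomorphic (restrict_alg A B) B8)"
proof -
  define k where "k = J (M x (N x)) (M y (N y))"
  define x1 where "x1 = J x (M y (N y))"
  define y1 where "y1 = M y (J x (N x))"
  have kC: "k \<in> CA" and x1C: "x1 \<in> CA" and y1C: "y1 \<in> CA" using xC yC by (simp_all add: k_def x1_def y1_def)
  have t: "L (M (N x) y) k" using hyp xC yC by (simp add: k_def)
  note F = sp1_facts[OF xC yC xy k_def t, folded x1_def y1_def]
  have nf: "\<not> L y1 x1" using fail F(2) x1C y1C L_antisym by (auto simp: x1_def y1_def)
  have nk: "\<not> L x1 k"
  proof
    assume h: "L x1 k"
    then have "L (N k) (N x1)" using kC x1C by simp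
    then have "L y1 (M y1 (N x1))" using F(3) y1C x1C kC L_trans by simp
    then have "L y1 k" using F(8) L_trans[of y1 "M y1 (N x1)" k] y1C x1C kC by simp
    then have "L y1 x1" using h L_trans[of y1 k x1] y1C x1C kC F(1) by simp
    then show False using nf by simp
  qed
  have nNk: "\<not> L (N x1) k"
  proof
    assume h: "L (N x1) k"
    then have "L (N k) x1" using kC x1C by (simp add: N_L_swap)
    then have "L y1 x1" using F(3) y1C x1C kC L_trans[of y1 "N k" x1] by simp
    then show False using nf by simp
  qed
  have lohi: "L x1 (N k) \<and> L k y1"
  proof
    show "L x1 (N k)" using F(2,3) x1C y1C kC L_trans[of x1 y1 "N k"] by simp
    show "L k y1" using F(1,2) x1C y1C kC L_trans[of k x1 y1] by simp
  qed
  have n4: "\<not> L (N y1) x1"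
  proof
    assume "L (N y1) x1"
    then have "L (N x1) y1" using x1C y1C by (simp add: N_L_swap)
    then have "L (N x1) (M y1 (N x1))" using x1C y1C by simp
    then show False using F(8) nNk L_trans[of "N x1" "M y1 (N x1)" k] x1C y1C kC by simp
  qed
  have nNy1k: "\<not> L (N y1) k"
    using n4 F(1) x1C y1C kC L_trans[of "N y1" k x1] by auto
  have n1: "\<not> L x1 (N y1)"
    using nk F(2,7) x1C y1C kC L_trans[of x1 "M y1 (N y1)" k] by auto
  have n2: "\<not> L x1 (N x1)"
    using nk F(6) x1C y1C kC L_trans[of x1 "M x1 (N x1)" k] by auto
  have n3: "\<not> L y1 (N y1)"
    using nf F(1,7) x1C y1C kC L_trans[of y1 "M y1 (N y1)" k] L_trans[of y1 k x1] by auto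
  have n5: "\<not> L (N y1) y1"
    using n4 F(1,7) x1C y1C kC L_trans[of "N y1" "M y1 (N y1)" k] L_trans[of "N y1" k x1] M_comm[of y1 "N y1"] by auto
  have n6: "\<not> L (N x1) x1"
    using nNk F(6) x1C y1C kC L_trans[of "N x1" "M x1 (N x1)" k] M_comm[of x1 "N x1"] by auto
  show ?thesis
  proof (cases "k = Z")
    case True
    define lo where "lo = (\<lambda>i. case i of B6_0 \<Rightarrow> Z | B6_x \<Rightarrow> x1 | B6_y \<Rightarrow> y1 | B6_y' \<Rightarrow> N y1 | B6_x' \<Rightarrow> N x1 | B6_1 \<Rightarrow> U)"
    have lo_car: "lo i \<in> CA" for i using x1C y1C by (cases i) (simp_all add: lo_def)
    have lo_bot: "lo (bot B6) = Z" by (simp add: lo_def)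
    have lohi_eq: "N (lo (neg B6 i)) = lo i" for i using x1C y1C by (cases i) (simp_all add: lo_def)
    have lohi: "L (lo i) (N (lo (neg B6 i)))" for i using lohi_eq lo_car by simp
    have cov: "L (lo i) (lo j)" if "(i,j) \<in> C_B6" for i j
      using that F(2) x1C y1C by (auto simp: lo_def)
    have himeet: "L (M (N (lo (neg B6 i))) (N (lo (neg B6 j)))) (N (lo (neg B6 (meet B6 i j))))"
      if "(i,j) \<in> Inc_B6" for i j
      using that F x1C y1C True by (auto simp: Inc_B6_def lo_def glb_B6 M_comm[of "N x1"] M_comm[of "N y1"])
    have keyA: "\<not> L (lo p) (N (lo (neg B6 q)))" if "(p,q) \<in> K_B6" for p q
      using that nf nk nNk nNy1k n1 n2 n3 n4 n5 n6 True x1C y1C by (auto simp: K_B6_def lo_def) 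
    have "\<exists>B. subalgebra B A \<and> isomorphic (restrict_alg A B) B6"
      by (rule interval_main(2)[OF good_B6 ord2_B6 lo_car lo_bot cov inc_B6 himeet lohi keys_B6 keyA lohi_eq])
    then show ?thesis by blast
  next
    case False
    define lo where "lo = (\<lambda>i. case i of B8_0 \<Rightarrow> Z | B8_z' \<Rightarrow> k | B8_x \<Rightarrow> x1 | B8_y \<Rightarrow> y1 | B8_y' \<Rightarrow> N y1 | B8_x' \<Rightarrow> N x1 | B8_z \<Rightarrow> N k | B8_1 \<Rightarrow> U)"
    have lo_car: "lo i \<in> CA" for i using x1C y1C kC by (cases i) (simp_all add: lo_def)
    have lo_bot: "lo (bot B8) = Z" by (simp add: lo_def)
    have lohi_eq: "N (lo (neg B8 i)) = lo i" for i using x1C y1C kC by (cases i) (simp_all add: lo_def)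
    have lohi: "L (lo i) (N (lo (neg B8 i)))" for i using lohi_eq lo_car by simp
    have cov: "L (lo i) (lo j)" if "(i,j) \<in> C_B8" for i j
      using that F x1C y1C kC by (auto simp: lo_def)
    have himeet: "L (M (N (lo (neg B8 i))) (N (lo (neg B8 j)))) (N (lo (neg B8 (meet B8 i j))))"
      if "(i,j) \<in> Inc_B8" for i j
      using that F x1C y1C kC by (auto simp: Inc_B8_def lo_def glb_B8 M_comm[of "N x1"] M_comm[of "N y1"])
    have UZ: "U \<noteq> Z"
    proof
      assume "U = Z"
      then have "L k Z" using L_U[OF kC] by simp
      then show False using False kC by simp
    qed
    have keyA: "\<not> L (lo p) (N (lo (neg B8 q)))" if "(p,q) \<in> K_B8" for p q
      using that UZ nf nk nNk nNy1k n1 n2 n3 n4 n5 n6 False x1C y1C kC by (auto simp: K_B8_def lo_def) 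
    have "\<exists>B. subalgebra B A \<and> isomorphic (restrict_alg A B) B8"
      by (rule interval_main(2)[OF good_B8 ord2_B8 lo_car lo_bot cov inc_B8 himeet lohi keys_B8 keyA lohi_eq])
    then show ?thesis by blast
  qed
qed


lemma b8s_case:
  assumes xC: "x \<in> CA" and yC: "y \<in> CA" and xy: "L x y"
  and W1: "M (J k (N y)) (N (J k (N y))) \<noteq> k"
  and kdef: "k = J (M x (N x)) (M y (N y))"
  shows "\<exists>B \<theta>. subalgebra B A \<and> congruence (restrict_alg A B) \<theta> \<and>
            isomorphic (quotient_alg (restrict_alg A B) \<theta>) B8s"
proof -
  define P where "P = J k (N y)"
  define W where "W = M (N P) P"
  have kC: "k \<in> CA" using xC yC kdef by simp
  have PC: "P \<in> CA" and WC: "W \<in> CA" using kC yC by (simp_all add: P_def W_def)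
  have yx: "L (N y) (N x)" using xy xC yC by simp
  have ka: "L (M x (N x)) k" "L (M y (N y)) k" using xC yC kdef by (simp_all add: J_L1 J_L2)
  have kle: "L k v" if "v \<in> CA" "L (M x (N x)) v" "L (M y (N y)) v" for v
    using that xC yC kdef by simp
  have Nk: "N k = M (J (N x) x) (J (N y) y)" using xC yC kdef by simp
  have knk: "L k (N k)" unfolding Nk using xC yC by (intro kle) (simp_all add: kl1 kl2 kl3 kl4)
  have ky: "L k y" using xC yC xy by (intro kle) (simp_all add: ML1 ML2 LJ1 LJ2)
  have NP: "N P = M (N k) y" using kC yC by (simp add: P_def)
  have kW: "L k W" using knk ky kC yC by (simp add: W_def NP P_def J_L1)
  have Wy: "L W y" using kC yC PC by (simp add: W_def NP ML1 ML2)
  have WP: "L W P" using PC by (simp add: W_def M_L2)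
  have WNP: "L W (N P)" using PC by (simp add: W_def M_L1)
  have nWk: "\<not> L W k" using W1 kW WC kC L_antisym M_comm[of P "N P"] PC by (auto simp: W_def P_def)
  have b_k: "L (M y (N y)) k" using ka by simp
  have s1: "\<not> L W (N y)"
  proof
    assume "L W (N y)"
    then have "L W (M y (N y))" using Wy WC yC by simp
    then show False using nWk b_k L_trans[of W "M y (N y)" k] WC yC kC by simp
  qed
  have s2: "\<not> L k (N y)"
  proof
    assume "L k (N y)"
    then have "L P (N y)" using kC yC by (simp add: P_def)
    then show False using s1 WP L_trans[of W P "N y"] WC PC yC by simp
  qed
  have s3: "\<not> L (N y) k"
  proof
    assume "L (N y) k"
    then have "L P k" using kC yC by (simp add: P_def)
    then show False using nWk WP L_trans[of W P k] WC PC kC by simp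
  qed
  have s4: "\<not> L (N y) y"
    using s3 b_k yC kC L_trans[of "N y" "M y (N y)" k] M_comm[of y "N y"] by auto
  have s5: "\<not> L y k"
  proof
    assume "L y k"
    then have "L (N k) (N y)" using yC kC by simp
    then show False using s2 knk L_trans[of k "N k" "N y"] yC kC by simp
  qed
  have s6: "\<not> L y (N y)"
    using s5 b_k yC kC L_trans[of y "M y (N y)" k] by auto
  have s7: "\<not> L (N k) k"
  proof
    assume "L (N k) k"
    then have "L (N y) k" using ky yC kC L_trans[of "N y" "N k" k] by simp
    then show False using s3 by simp
  qed
  define lo where "lo = (\<lambda>i. case i of S_0 \<Rightarrow> Z | S_x \<Rightarrow> k | S_y \<Rightarrow> N y | S_z \<Rightarrow> W | S_z' \<Rightarrow> P
     | S_y' \<Rightarrow> y | S_x' \<Rightarrow> N k | S_1 \<Rightarrow> J (N k) y)"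
  have lo_car: "lo i \<in> CA" for i using kC yC PC WC by (cases i) (simp_all add: lo_def)
  have lo_bot: "lo (bot B8s) = Z" by (simp add: lo_def)
  have NW: "N W = J P (N P)" using PC by (simp add: W_def)
  have lohi: "L (lo i) (N (lo (neg B8s i)))" for i
    using kC yC PC WC WNP by (cases i) (simp_all add: lo_def NW J_L1 J_L2 M_L1 M_L2)
  have cov: "L (lo i) (lo j)" if "(i,j) \<in> C_B8s" for i j
    using that kC yC PC WC kW WP Wy knk ky
    by (auto simp: lo_def P_def ML1 ML2 LJ1 LJ2 J_L1 J_L2)
  have himeet: "L (M (N (lo (neg B8s i))) (N (lo (neg B8s j)))) (N (lo (neg B8s (meet B8s i j))))"
    if "(i,j) \<in> Inc_B8s" for i j
    using that kC yC PC WC knk ky b_k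
    by (auto simp: Inc_B8s_def lo_def glb_B8s NW NP P_def ML1 ML2 LJ1 LJ2 J_L1 J_L2 tr1[OF b_k])
  have keyA: "\<not> L (lo p) (N (lo (neg B8s q)))" if "(p,q) \<in> K_B8s" for p q
    using that nWk s1 s2 s3 s4 s5 s6 s7 kC yC by (auto simp: K_B8s_def lo_def)
  show ?thesis
    by (rule interval_main(1)[OF good_B8s ord2_B8s lo_car lo_bot cov inc_B8s himeet lohi keys_B8s keyA])
qed


lemma b10_case:
  assumes xC: "x \<in> CA" and yC: "y \<in> CA" and xy: "L x y"
  and kdef: "k = J (M x (N x)) (M y (N y))"
  and W1: "M (J k (N y)) (N (J k (N y))) = k"
  and W2: "M (J k x) (N (J k x)) = k"
  and fail: "M (M (N x) y) (N (M (N x) y)) \<noteq> k"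
  shows "\<exists>B \<theta>. subalgebra B A \<and> congruence (restrict_alg A B) \<theta> \<and>
            isomorphic (quotient_alg (restrict_alg A B) \<theta>) B10"
proof -
  define t where "t = M (N x) y"
  define c where "c = M t (N t)"
  have kC: "k \<in> CA" using xC yC kdef by simp
  have tC: "t \<in> CA" and cC: "c \<in> CA" using xC yC by (simp_all add: t_def c_def)
  have yx: "L (N y) (N x)" using xy xC yC by simp
  have ka: "L (M x (N x)) k" "L (M y (N y)) k" using xC yC kdef by (simp_all add: J_L1 J_L2)
  have kle: "L k v" if "v \<in> CA" "L (M x (N x)) v" "L (M y (N y)) v" for v
    using that xC yC kdef by simp
  have Nk: "N k = M (J (N x) x) (J (N y) y)" using xC yC kdef by simp
  have knk: "L k (N k)" unfolding Nk using xC yC by (intro kle) (simp_all add: kl1 kl2 kl3 kl4)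
  have ky: "L k y" using xC yC xy by (intro kle) (simp_all add: ML1 ML2 LJ1 LJ2)
  have kNx: "L k (N x)" using xC yC yx by (intro kle) (simp_all add: ML1 ML2 LJ1 LJ2)
  have xNk: "L x (N k)" using kNx xC kC by (simp add: L_N_swap)
  have NyNk: "L (N y) (N k)" using ky yC kC by simp
  have ct: "L c t" and cNt: "L c (N t)" using tC by (simp_all add: c_def M_L1 M_L2)
  have tNx: "L t (N x)" and ty: "L t y" using xC yC by (simp_all add: t_def M_L1 M_L2)
  have tI: "L u t" if "u \<in> CA" "L u (N x)" "L u y" for u using that xC yC by (simp add: t_def)
  have Nt: "N t = J x (N y)" using xC yC by (simp add: t_def)
  have kt: "L k t" using tI kNx ky kC by simp
  have kNt: "L k (N t)" unfolding Nt using kC xC yC by (intro kle) (simp_all add: LJ1 LJ2 ML1 ML2)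
  have kc: "L k c" using kt kNt kC tC by (simp add: c_def)
  have cNc: "L c (N c)" using tC by (simp add: c_def ML1 ML2 LJ1 LJ2)
  have cNx: "L c (N x)" and cy: "L c y" using ct tNx ty L_trans cC tC xC yC by (meson cN)+
  have xNc: "L x (N c)" using cNx xC cC by (simp add: L_N_swap)
  have NyNc: "L (N y) (N c)" using cy yC cC by simp
  have cNk: "L c (N k)" using cNc kc L_trans[of c "N c" "N k"] kC cC by simp
  have NcNk: "L (N c) (N k)" using kc kC cC by simp
  have NtNc: "L (N t) (N c)" using ct tC cC by simp
  have nck: "\<not> L c k" using fail kc cC kC L_antisym by (auto simp: c_def t_def)
  have w1: "L (M (J (N y) k) y) k"
  proof -
    have "L (M (J (N y) k) y) (M (J k (N y)) (N (J k (N y))))"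
      using kC yC knk ky by (simp add: ML1 ML2 LJ1 LJ2 J_comm[of "N y" k])
    then show ?thesis using W1 by simp
  qed
  have w2: "L (M (J x k) (N x)) k"
  proof -
    have "L (M (J x k) (N x)) (M (J k x) (N (J k x)))"
      using kC xC knk kNx xNk by (simp add: ML1 ML2 LJ1 LJ2 J_comm[of x k])
    then show ?thesis using W2 by simp
  qed
  have base1: "\<not> L c (J x k)"
  proof
    assume "L c (J x k)"
    then have "L c (M (J x k) (N x))" using cNx cC xC kC by simp
    then show False using w2 nck L_trans[of c "M (J x k) (N x)" k] cC xC kC by simp
  qed
  have base2: "\<not> L c (J (N y) k)"
  proof
    assume "L c (J (N y) k)"
    then have "L c (M (J (N y) k) y)" using cy cC yC kC by simp
    then show False using w1 nck L_trans[of c "M (J (N y) k) y" k] cC yC kC by simp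
  qed
  have g1: "\<not> L x (J (N y) k)"
  proof
    assume "L x (J (N y) k)"
    then have "L (N t) (J (N y) k)" using xC yC kC by (simp add: Nt J_L1)
    then show False using base2 cNt L_trans[of c "N t" "J (N y) k"] cC tC yC kC by simp
  qed
  have g2: "\<not> L (N y) (J x k)"
  proof
    assume "L (N y) (J x k)"
    then have "L (N t) (J x k)" using xC yC kC by (simp add: Nt J_L1)
    then show False using base1 cNt L_trans[of c "N t" "J x k"] cC tC xC kC by simp
  qed
  have g3: "\<not> L x (N x)"
  proof
    assume "L x (N x)"
    then have "L x k" using ka L_trans[of x "M x (N x)" k] xC kC by simp
    then show False using g1 xC yC kC by (simp add: LJ2)
  qed
  have g4: "\<not> L (N y) y"
  proof
    assume "L (N y) y"
    then have "L (N y) k" using ka L_trans[of "N y" "M y (N y)" k] yC kC by simp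
    then show False using g2 xC yC kC by (simp add: LJ2)
  qed
  have g5: "\<not> L (M (N x) (N k)) (J x k)"
    using base1 cNx cNk L_trans[of c "M (N x) (N k)" "J x k"] cC xC kC by auto
  have g6: "\<not> L (M (N x) (N k)) (J (N y) k)"
    using base2 cNx cNk L_trans[of c "M (N x) (N k)" "J (N y) k"] cC xC yC kC by auto
  have g7: "\<not> L (M y (N k)) (J (N y) k)"
    using base2 cy cNk L_trans[of c "M y (N k)" "J (N y) k"] cC xC yC kC by auto
  define lo where "lo = (\<lambda>i. case i of T_0 \<Rightarrow> Z | T_x \<Rightarrow> x | T_y' \<Rightarrow> N y | T_m \<Rightarrow> c | T_a \<Rightarrow> J x c
     | T_a' \<Rightarrow> J (N y) c | T_x' \<Rightarrow> M (N x) (N k) | T_y \<Rightarrow> M y (N k) | T_m' \<Rightarrow> M (N t) (N k) | T_1 \<Rightarrow> N k)"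
  have lo_car: "lo i \<in> CA" for i using kC xC yC tC cC by (cases i) (simp_all add: lo_def)
  have lo_bot: "lo (bot B10) = Z" by (simp add: lo_def)
  have xNt: "L x (N t)" and NyNt: "L (N y) (N t)" using xC yC by (simp_all add: Nt J_L1 J_L2)
  note F = xNt NyNt xC yC kC tC cC xy yx ky kNx xNk NyNk ct cNt tNx ty kt kNt kc cNc cNx cy xNc NyNc cNk NcNk NtNc
  have lohi: "L (lo i) (N (lo (neg B10 i)))" for i
    using F by (cases i) (simp_all add: lo_def ML1 ML2 LJ1 LJ2 J_L1 J_L2 M_L1 M_L2)
  have cov: "L (lo i) (lo j)" if "(i,j) \<in> C_B10" for i j
    using that F by (auto simp: lo_def ML1 ML2 LJ1 LJ2 J_L1 J_L2)
  have himeet: "L (M (N (lo (neg B10 i))) (N (lo (neg B10 j)))) (N (lo (neg B10 (meet B10 i j))))"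
    if "(i,j) \<in> Inc_B10" for i j
    using that F
    by (auto simp: Inc_B10_def lo_def glb_B10 ML1 ML2 LJ1 LJ2 J_L1 J_L2 tr1[OF w1] tr1[OF w2] tI)
  have keyA: "\<not> L (lo p) (N (lo (neg B10 q)))" if "(p,q) \<in> K_B10" for p q
    using that base1 base2 g1 g2 g3 g4 g5 g6 g7 F by (auto simp: K_B10_def lo_def)
  show ?thesis
    by (rule interval_main(1)[OF good_B10 ord2_B10 lo_car lo_bot cov inc_B10 himeet lohi keys_B10 keyA])
qed


lemma sp2_case:
  assumes xC: "x \<in> CA" and yC: "y \<in> CA" and xy: "L x y"
  and fail: "J (M x (N x)) (M y (N y)) \<noteq> M (M (N x) y) (N (M (N x) y))"
  shows "\<exists>B \<theta>. subalgebra B A \<and> congruence (restrict_alg A B) \<theta> \<and>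
            (isomorphic (quotient_alg (restrict_alg A B) \<theta>) B8s \<or>
             isomorphic (quotient_alg (restrict_alg A B) \<theta>) B10)"
proof -
  define k where "k = J (M x (N x)) (M y (N y))"
  have kC: "k \<in> CA" using xC yC by (simp add: k_def)
  show ?thesis
  proof (cases "M (J k (N y)) (N (J k (N y))) = k")
    case False
    then show ?thesis using b8s_case[OF xC yC xy False k_def] by blast
  next
    case W1: True
    show ?thesis
    proof (cases "M (J k x) (N (J k x)) = k")
      case False
      have xy2: "L (N y) (N x)" using xy xC yC by simp
      have k2: "k = J (M (N y) (N (N y))) (M (N x) (N (N x)))"
        using xC yC by (simp add: k_def M_comm[of "N y" y] M_comm[of "N x" x] J_comm[of "M x (N x)"])
      have W: "M (J k (N (N x))) (N (J k (N (N x)))) \<noteq> k" using False xC by simp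
      show ?thesis using b8s_case[OF cN[OF yC] cN[OF xC] xy2 W k2] by blast
    next
      case W2: True
      have f: "M (M (N x) y) (N (M (N x) y)) \<noteq> k" using fail by (simp add: k_def)
      show ?thesis using b10_case[OF xC yC xy k_def W1 W2 f] by blast
    qed
  qed
qed

lemma transfer_sp2:
  fixes T :: "'b pkl" and h :: "'a \<Rightarrow> 'b"
  assumes SP: "super_paraorthomodular A"
  and BC: "B \<subseteq> CA" and cl: "\<And>u v. u \<in> B \<Longrightarrow> v \<in> B \<Longrightarrow> M u v \<in> B \<and> J u v \<in> B" "\<And>u. u \<in> B \<Longrightarrow> N u \<in> B"
  and hM: "\<And>u v. u \<in> B \<Longrightarrow> v \<in> B \<Longrightarrow> h (M u v) = meet T (h u) (h v)"
  and hJ: "\<And>u v. u \<in> B \<Longrightarrow> v \<in> B \<Longrightarrow> h (J u v) = join T (h u) (h v)"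
  and hN: "\<And>u. u \<in> B \<Longrightarrow> h (N u) = neg T (h u)"
  and surj: "\<And>i. \<exists>u\<in>B. h u = i"
  and pq: "leq T p q"
  shows "join T (meet T p (neg T p)) (meet T q (neg T q)) =
         meet T (meet T (neg T p) q) (neg T (meet T (neg T p) q))"
proof -
  obtain u where u: "u \<in> B" "h u = p" using surj by blast
  obtain v where v: "v \<in> B" "h v = q" using surj by blast
  define u0 where "u0 = M u v"
  have u0B: "u0 \<in> B" using cl u v by (simp add: u0_def)
  have hu0: "h u0 = p" using hM[OF u(1) v(1)] u v pq by (simp add: u0_def leq_def)
  have uC: "u \<in> CA" and vC: "v \<in> CA" using BC u v by auto
  have le: "L u0 v" using uC vC by (simp add: u0_def M_L2)
  have "J (M u0 (N u0)) (M v (N v)) = M (M (N u0) v) (N (M (N u0) v))"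
    using SP le u0B vC BC unfolding super_paraorthomodular_def by blast
  then have "h (J (M u0 (N u0)) (M v (N v))) = h (M (M (N u0) v) (N (M (N u0) v)))" by simp
  then show ?thesis using u0B v cl hu0
    by (simp add: hM hJ hN)
qed

lemma transfer_sp1:
  fixes T :: "'b pkl" and h :: "'a \<Rightarrow> 'b"
  assumes SP: "super_paraorthomodular A"
  and BC: "B \<subseteq> CA" and cl: "\<And>u v. u \<in> B \<Longrightarrow> v \<in> B \<Longrightarrow> M u v \<in> B \<and> J u v \<in> B" "\<And>u. u \<in> B \<Longrightarrow> N u \<in> B"
  and hM: "\<And>u v. u \<in> B \<Longrightarrow> v \<in> B \<Longrightarrow> h (M u v) = meet T (h u) (h v)"
  and hJ: "\<And>u v. u \<in> B \<Longrightarrow> v \<in> B \<Longrightarrow> h (J u v) = join T (h u) (h v)"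
  and hN: "\<And>u. u \<in> B \<Longrightarrow> h (N u) = neg T (h u)"
  and surj: "\<And>i. \<exists>u\<in>B. h u = i"
  and inj: "inj_on h B"
  and pq: "leq T p q"
  and hyp: "meet T (neg T p) q = join T (meet T p (neg T p)) (meet T q (neg T q))"
  shows "meet T q (join T p (neg T p)) = join T p (meet T q (neg T q))"
proof -
  obtain u where u: "u \<in> B" "h u = p" using surj by blast
  obtain v where v: "v \<in> B" "h v = q" using surj by blast
  define u0 where "u0 = M u v"
  have u0B: "u0 \<in> B" using cl u v by (simp add: u0_def)
  have hu0: "h u0 = p" using hM[OF u(1) v(1)] u v pq by (simp add: u0_def leq_def)
  have uC: "u \<in> CA" and vC: "v \<in> CA" using BC u v by auto
  have le: "L u0 v" using uC vC by (simp add: u0_def M_L2)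
  have B1: "M (N u0) v \<in> B" and B2: "J (M u0 (N u0)) (M v (N v)) \<in> B" using cl u0B v by auto
  have "h (M (N u0) v) = h (J (M u0 (N u0)) (M v (N v)))"
    using hyp u0B v cl hu0 by (simp add: hM hJ hN)
  then have "M (N u0) v = J (M u0 (N u0)) (M v (N v))" using inj B1 B2 by (simp add: inj_on_def)
  then have "M v (J u0 (N u0)) = J u0 (M v (N v))"
    using SP le u0B vC BC unfolding super_paraorthomodular_def by blast
  then have "h (M v (J u0 (N u0))) = h (J u0 (M v (N v)))" by simp
  then show ?thesis using u0B v cl hu0
    by (simp add: hM hJ hN)
qed


lemma sub_props:
  assumes "subalgebra B A"
  shows "B \<subseteq> CA" "\<And>u v. u \<in> B \<Longrightarrow> v \<in> B \<Longrightarrow> M u v \<in> B \<and> J u v \<in> B" "\<And>u. u \<in> B \<Longrightarrow> N u \<in> B"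
  using assms by (auto simp: subalgebra_def closed_ops_def)

lemma no_iso_sp1:
  fixes T :: "'b pkl"
  assumes SP: "super_paraorthomodular A" and sub: "subalgebra B A"
  and iso: "isomorphic (restrict_alg A B) T" and Tcar: "carrier T = UNIV"
  and pq: "leq T p q"
  and hyp: "meet T (neg T p) q = join T (meet T p (neg T p)) (meet T q (neg T q))"
  shows "meet T q (join T p (neg T p)) = join T p (meet T q (neg T q))"
proof -
  obtain f where f: "iso (restrict_alg A B) T f" using iso by (auto simp: isomorphic_def)
  have bij: "bij_betw f B UNIV" using f Tcar by (simp add: iso_def)
  show ?thesis
  proof (rule transfer_sp1[OF SP sub_props[OF sub] _ _ _ _ _ pq hyp])
    show "\<And>u v. u \<in> B \<Longrightarrow> v \<in> B \<Longrightarrow> f (M u v) = meet T (f u) (f v)" using f by (simp add: iso_def)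
    show "\<And>u v. u \<in> B \<Longrightarrow> v \<in> B \<Longrightarrow> f (J u v) = join T (f u) (f v)" using f by (simp add: iso_def)
    show "\<And>u. u \<in> B \<Longrightarrow> f (N u) = neg T (f u)" using f by (simp add: iso_def)
    show "\<And>i. \<exists>u\<in>B. f u = i" using bij by (metis UNIV_I bij_betw_iff_bijections)
    show "inj_on f B" using bij by (simp add: bij_betw_def)
  qed
qed

lemma no_quot_sp2:
  fixes T :: "'b pkl"
  assumes SP: "super_paraorthomodular A" and sub: "subalgebra B A"
  and cong: "congruence (restrict_alg A B) \<theta>"
  and iso: "isomorphic (quotient_alg (restrict_alg A B) \<theta>) T" and Tcar: "carrier T = UNIV"
  and pq: "leq T p q"
  shows "join T (meet T p (neg T p)) (meet T q (neg T q)) =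
         meet T (meet T (neg T p) q) (neg T (meet T (neg T p) q))"
proof -
  obtain F where F: "iso (quotient_alg (restrict_alg A B) \<theta>) T F" using iso by (auto simp: isomorphic_def)
  let ?Q = "quotient_alg (restrict_alg A B) \<theta>"
  have carQ: "carrier ?Q = B // \<theta>" by (simp add: quotient_alg_def)
  have eqv: "equiv B \<theta>" using cong by (simp add: congruence_def)
  have cM': "(x, x') \<in> \<theta> \<Longrightarrow> (y, y') \<in> \<theta> \<Longrightarrow> (M x y, M x' y') \<in> \<theta> \<and> (J x y, J x' y') \<in> \<theta>" for x x' y y'
    using cong by (simp add: congruence_def)
  have cN': "(x, x') \<in> \<theta> \<Longrightarrow> (N x, N x') \<in> \<theta>" for x x'
    using cong by (simp add: congruence_def)
  define h where "h u = F (\<theta> `` {u})" for u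
  have FM: "\<And>X Y. X \<in> carrier ?Q \<Longrightarrow> Y \<in> carrier ?Q \<Longrightarrow> F (meet ?Q X Y) = meet T (F X) (F Y)"
    and FJ: "\<And>X Y. X \<in> carrier ?Q \<Longrightarrow> Y \<in> carrier ?Q \<Longrightarrow> F (join ?Q X Y) = join T (F X) (F Y)"
    and FN: "\<And>X. X \<in> carrier ?Q \<Longrightarrow> F (neg ?Q X) = neg T (F X)"
    using F unfolding iso_def by blast+
  have cls: "u \<in> B \<Longrightarrow> \<theta> `` {u} \<in> carrier ?Q" for u by (simp add: carQ quotientI)
  have some: "u \<in> B \<Longrightarrow> (u, SOME w. w \<in> \<theta> `` {u}) \<in> \<theta>" for u
  proof -
    assume u: "u \<in> B"
    have "u \<in> \<theta> `` {u}" using eqv u by (auto simp: equiv_def refl_on_def)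
    then have "(SOME w. w \<in> \<theta> `` {u}) \<in> \<theta> `` {u}" by (rule someI)
    then show ?thesis by simp
  qed
  have hM: "h (M u v) = meet T (h u) (h v)" if "u \<in> B" "v \<in> B" for u v
  proof -
    have "(M u v, M (SOME w. w \<in> \<theta> `` {u}) (SOME w. w \<in> \<theta> `` {v})) \<in> \<theta>"
      using cM' some that by blast
    then have "\<theta> `` {M (SOME w. w \<in> \<theta> `` {u}) (SOME w. w \<in> \<theta> `` {v})} = \<theta> `` {M u v}"
      using eqv by (simp add: equiv_class_eq)
    then have "meet ?Q (\<theta> `` {u}) (\<theta> `` {v}) = \<theta> `` {M u v}" by (simp add: quotient_alg_def)
    then show ?thesis using FM[OF cls[OF that(1)] cls[OF that(2)]] by (simp add: h_def)
  qed
  have hJ: "h (J u v) = join T (h u) (h v)" if "u \<in> B" "v \<in> B" for u v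
  proof -
    have "(J u v, J (SOME w. w \<in> \<theta> `` {u}) (SOME w. w \<in> \<theta> `` {v})) \<in> \<theta>"
      using cM' some that by blast
    then have "\<theta> `` {J (SOME w. w \<in> \<theta> `` {u}) (SOME w. w \<in> \<theta> `` {v})} = \<theta> `` {J u v}"
      using eqv by (simp add: equiv_class_eq)
    then have "join ?Q (\<theta> `` {u}) (\<theta> `` {v}) = \<theta> `` {J u v}" by (simp add: quotient_alg_def)
    then show ?thesis using FJ[OF cls[OF that(1)] cls[OF that(2)]] by (simp add: h_def)
  qed
  have hN: "h (N u) = neg T (h u)" if "u \<in> B" for u
  proof -
    have "(N u, N (SOME w. w \<in> \<theta> `` {u})) \<in> \<theta>" using cN' some that by blast
    then have "\<theta> `` {N (SOME w. w \<in> \<theta> `` {u})} = \<theta> `` {N u}"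
      using eqv by (simp add: equiv_class_eq)
    then have "neg ?Q (\<theta> `` {u}) = \<theta> `` {N u}" by (simp add: quotient_alg_def)
    then show ?thesis using FN[OF cls[OF that]] by (simp add: h_def)
  qed
  have surj: "\<exists>u\<in>B. h u = i" for i
  proof -
    have "bij_betw F (B // \<theta>) UNIV" using F Tcar carQ by (simp add: iso_def)
    then obtain X where X: "X \<in> B // \<theta>" "F X = i" by (metis UNIV_I bij_betw_iff_bijections)
    then obtain u where "u \<in> B" "X = \<theta> `` {u}" by (auto simp: quotient_def)
    then show ?thesis using X by (auto simp: h_def)
  qed
  show ?thesis by (rule transfer_sp2[OF SP sub_props[OF sub] hM hJ hN surj pq])
qed

end

lemma B6_fail: "leq B6 B6_x B6_y \<and> meet B6 (neg B6 B6_x) B6_y = join B6 (meet B6 B6_x (neg B6 B6_x)) (meet B6 B6_y (neg B6 B6_y))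
   \<and> meet B6 B6_y (join B6 B6_x (neg B6 B6_x)) \<noteq> join B6 B6_x (meet B6 B6_y (neg B6 B6_y))"
  by (simp add: leq_B6 le_B6_def glb_B6 lub_B6)
lemma B8_fail: "leq B8 B8_x B8_y \<and> meet B8 (neg B8 B8_x) B8_y = join B8 (meet B8 B8_x (neg B8 B8_x)) (meet B8 B8_y (neg B8 B8_y))
   \<and> meet B8 B8_y (join B8 B8_x (neg B8 B8_x)) \<noteq> join B8 B8_x (meet B8 B8_y (neg B8 B8_y))"
  by (simp add: leq_B8 le_B8_def glb_B8 lub_B8)
lemma B8s_fail: "leq B8s S_x S_y' \<and> join B8s (meet B8s S_x (neg B8s S_x)) (meet B8s S_y' (neg B8s S_y')) \<noteq>
         meet B8s (meet B8s (neg B8s S_x) S_y') (neg B8s (meet B8s (neg B8s S_x) S_y'))"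
  by (simp add: leq_B8s le_B8s_def glb_B8s lub_B8s)
lemma B10_fail: "leq B10 T_x T_y \<and> join B10 (meet B10 T_x (neg B10 T_x)) (meet B10 T_y (neg B10 T_y)) \<noteq>
         meet B10 (meet B10 (neg B10 T_x) T_y) (neg B10 (meet B10 (neg B10 T_x) T_y))"
  by (simp add: leq_B10 le_B10_def glb_B10 lub_B10)

theorem theorem4p1:
  fixes A :: "'a pkl"
  assumes "pseudo_kleene A"
  shows "super_paraorthomodular A \<longleftrightarrow>
    (\<not> (\<exists>B. subalgebra B A \<and> isomorphic (restrict_alg A B) B6)) \<and>
    (\<not> (\<exists>B. subalgebra B A \<and> isomorphic (restrict_alg A B) B8)) \<and>
    (\<not> (\<exists>B \<theta>. subalgebra B A \<and> congruence (restrict_alg A B) \<theta> \<and>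
          (isomorphic (quotient_alg (restrict_alg A B) \<theta>) B8s \<or>
           isomorphic (quotient_alg (restrict_alg A B) \<theta>) B10)))"
proof -
  interpret pk A by (rule pk.intro[OF assms])
  show ?thesis
  proof
    assume SP: "super_paraorthomodular A"
    have n6: "\<not> (\<exists>B. subalgebra B A \<and> isomorphic (restrict_alg A B) B6)"
      using no_iso_sp1[OF SP _ _ B6_simps(1)] B6_fail by blast
    have n8: "\<not> (\<exists>B. subalgebra B A \<and> isomorphic (restrict_alg A B) B8)"
      using no_iso_sp1[OF SP _ _ B8_simps(1)] B8_fail by blast
    have nq: "\<not> (\<exists>B \<theta>. subalgebra B A \<and> congruence (restrict_alg A B) \<theta> \<and>
          (isomorphic (quotient_alg (restrict_alg A B) \<theta>) B8s \<or>
           isomorphic (quotient_alg (restrict_alg A B) \<theta>) B10))"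
      using no_quot_sp2[OF SP _ _ _ B8s_simps(1)] no_quot_sp2[OF SP _ _ _ B10_simps(1)] B8s_fail B10_fail
      by blast
    show "(\<not> (\<exists>B. subalgebra B A \<and> isomorphic (restrict_alg A B) B6)) \<and>
      (\<not> (\<exists>B. subalgebra B A \<and> isomorphic (restrict_alg A B) B8)) \<and>
      (\<not> (\<exists>B \<theta>. subalgebra B A \<and> congruence (restrict_alg A B) \<theta> \<and>
          (isomorphic (quotient_alg (restrict_alg A B) \<theta>) B8s \<or>
           isomorphic (quotient_alg (restrict_alg A B) \<theta>) B10)))"
      using n6 n8 nq by blast
  next
    assume H: "(\<not> (\<exists>B. subalgebra B A \<and> isomorphic (restrict_alg A B) B6)) \<and>
      (\<not> (\<exists>B. subalgebra B A \<and> isomorphic (restrict_alg A B) B8)) \<and>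
      (\<not> (\<exists>B \<theta>. subalgebra B A \<and> congruence (restrict_alg A B) \<theta> \<and>
          (isomorphic (quotient_alg (restrict_alg A B) \<theta>) B8s \<or>
           isomorphic (quotient_alg (restrict_alg A B) \<theta>) B10)))"
    have sp1: "M y (J x (N x)) = J x (M y (N y))"
      if "x \<in> CA" "y \<in> CA" "L x y" "M (N x) y = J (M x (N x)) (M y (N y))" for x y
      using sp1_case[OF that] H by blast
    have sp2: "J (M x (N x)) (M y (N y)) = M (M (N x) y) (N (M (N x) y))"
      if "x \<in> CA" "y \<in> CA" "L x y" for x y
      using sp2_case[OF that] H by blast
    show "super_paraorthomodular A"
      unfolding super_paraorthomodular_def using sp1 sp2 by blast
  qed
qed


end
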